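(* Let $\pi$ be a probability measure on a measurable space $\mathsf{X}$, let $\{q(x,\cdot)\}_{x\in\mathsf{X}}$ be a Markov kernel of proposal distributions, and for each $x\in\mathsf{X}$ let $Q_{x}$ be a probability measure on $\mathbb{R}_{+}$ with $\int wQ_{x}(\mathrm{d}w)=1$; set $\tilde{\pi}_{x}(\mathrm{d}w):=wQ_{x}(\mathrm{d}w)$ and $\tilde{\pi}(\mathrm{d}x,\mathrm{d}w):=\pi(\mathrm{d}x)\tilde{\pi}_{x}(\mathrm{d}w)$ on $\mathsf{E}:=\mathsf{X}\times\mathbb{R}_{+}$. Let $\mathfrak{r}(x,y):=\frac{\pi(\mathrm{d}y)q(y,\mathrm{d}x)}{\pi(\mathrm{d}x)q(x,\mathrm{d}y)}$ and $a(x,y):=1\wedge\mathfrak{r}(x,y)$. Define the pseudo-marginal kernel \[ \tilde{P}(x,w;\mathrm{d}y,\mathrm{d}u):=\Big[1\wedge\Big\{\mathfrak{r}(x,y)\frac{u}{w}\Big\}\Big]q(x,\mathrm{d}y)Q_{y}(\mathrm{d}u)+\delta_{(x,w)}(\mathrm{d}y,\mathrm{d}u)\tilde{\rho}(x,w), \] and the embedded marginal kernel \[ \bar{P}(x,w;\mathrm{d}y,\mathrm{d}u):=a(x,y)q(x,\mathrm{d}y)\tilde{\pi}_{y}(\mathrm{d}u)+\delta_{(x,w)}(\mathrm{d}y,\mathrm{d}u)\rho(x), \] where $\tilde{\rho}(x,w)$ and $\rho(x)=1-\int a(x,y)q(x,\mathrm{d}y)$ are the rejection probabilities making these Markov kernels.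 Then for any $p\in(1,\infty]$, $q\ge1$ with $p^{-1}+q^{-1}=1$, any $s>0$ and any $f\in\mathrm{L}_{0}^{2p}(\tilde{\pi})$, \[ \mathcal{E}(\bar{P},f)\le s\,\mathcal{E}(\tilde{P},f)+\Phi_{p}(f)\Big(\int_{\mathsf{X}}\tilde{\pi}_{x}(w\ge s)\,\pi(\mathrm{d}x)\Big)^{1/q}, \] where $\Phi_{p}(f):=4\|f\|_{2p}^{2}$ for $p\in(1,\infty)$ and $\Phi_{\infty}(f):=\|f\|_{\mathrm{osc}}^{2}$.
   Context: All norms, $\mathrm{L}^{r}$ spaces and Dirichlet forms are with respect to $\tilde{\pi}$: $\|f\|_{r}=(\int|f|^{r}\mathrm{d}\tilde{\pi})^{1/r}$, $\mathrm{L}_{0}^{r}(\tilde{\pi})$ consists of $f$ with finite $r$-norm and $\tilde{\pi}(f)=0$, $\|f\|_{\mathrm{osc}}$ is the $\tilde{\pi}$-essential supremum minus essential infimum, and $\mathcal{E}(T,f)=\langle(\mathrm{Id}-T)f,f\rangle_{\mathrm{L}^{2}(\tilde{\pi})}$. $\mathfrak{r}$ is the Radon–Nikodym derivative of $\pi(\mathrm{d}y)q(y,\mathrm{d}x)$ with respect to $\pi(\mathrm{d}x)q(x,\mathrm{d}y)$ (Metropolis–Hastings ratio). Both $\tilde{P}$ and $\bar{P}$ are $\tilde{\pi}$-invariant. *)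

theory Defs
  imports "HOL-Probability.Probability"
begin

definition pitilde_x :: "('a \<Rightarrow> real measure) \<Rightarrow> 'a \<Rightarrow> real measure" where
  "pitilde_x Q x = density (Q x) (\<lambda>w. ennreal w)"

definition pitilde :: "'a measure \<Rightarrow> ('a \<Rightarrow> real measure) \<Rightarrow> ('a \<times> real) measure" where
  "pitilde \<pi> Q = \<pi> \<bind> (\<lambda>x. distr (pitilde_x Q x) (\<pi> \<Otimes>\<^sub>M borel) (\<lambda>w. (x, w)))"

definition prop_joint :: "'a measure \<Rightarrow> ('a \<Rightarrow> 'a measure) \<Rightarrow> ('a \<times> 'a) measure" where
  "prop_joint \<pi> q = \<pi> \<bind> (\<lambda>x. distr (q x) (\<pi> \<Otimes>\<^sub>M \<pi>) (\<lambda>y. (x, y)))"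

definition rev_joint :: "'a measure \<Rightarrow> ('a \<Rightarrow> 'a measure) \<Rightarrow> ('a \<times> 'a) measure" where
  "rev_joint \<pi> q = distr (prop_joint \<pi> q) (\<pi> \<Otimes>\<^sub>M \<pi>) (\<lambda>(x, y). (y, x))"

definition mh_ratio :: "'a measure \<Rightarrow> ('a \<Rightarrow> 'a measure) \<Rightarrow> 'a \<Rightarrow> 'a \<Rightarrow> real" where
  "mh_ratio \<pi> q x y = enn2real (RN_deriv (prop_joint \<pi> q) (rev_joint \<pi> q) (x, y))"

definition mh_accept :: "'a measure \<Rightarrow> ('a \<Rightarrow> 'a measure) \<Rightarrow> 'a \<Rightarrow> 'a \<Rightarrow> real" where
  "mh_accept \<pi> q x y = min 1 (mh_ratio \<pi> q x y)"

definition mh_kernel :: "'b measure \<Rightarrow> ('b \<Rightarrow> 'b measure) \<Rightarrow> ('b \<Rightarrow> 'b \<Rightarrow> real) \<Rightarrow> 'b \<Rightarrow> 'b measure" where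
  "mh_kernel E K \<alpha> z = measure_of (space E) (sets E)
     (\<lambda>A. (\<integral>\<^sup>+ z'. ennreal (\<alpha> z z') * indicator A z' \<partial>K z)
          + indicator A z * ennreal (1 - (\<integral> z'. \<alpha> z z' \<partial>K z)))"

definition Ptilde :: "'a measure \<Rightarrow> ('a \<Rightarrow> 'a measure) \<Rightarrow> ('a \<Rightarrow> real measure) \<Rightarrow> 'a \<times> real \<Rightarrow> ('a \<times> real) measure" where
  "Ptilde \<pi> q Q = mh_kernel (\<pi> \<Otimes>\<^sub>M borel)
     (\<lambda>(x, w). q x \<bind> (\<lambda>y. distr (Q y) (\<pi> \<Otimes>\<^sub>M borel) (\<lambda>u. (y, u))))
     (\<lambda>(x, w) (y, u). min 1 (mh_ratio \<pi> q x y * (u / w)))"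

definition Pbar :: "'a measure \<Rightarrow> ('a \<Rightarrow> 'a measure) \<Rightarrow> ('a \<Rightarrow> real measure) \<Rightarrow> 'a \<times> real \<Rightarrow> ('a \<times> real) measure" where
  "Pbar \<pi> q Q = mh_kernel (\<pi> \<Otimes>\<^sub>M borel)
     (\<lambda>(x, w). q x \<bind> (\<lambda>y. distr (pitilde_x Q y) (\<pi> \<Otimes>\<^sub>M borel) (\<lambda>u. (y, u))))
     (\<lambda>(x, w) (y, u). mh_accept \<pi> q x y)"

definition dirichlet :: "'b measure \<Rightarrow> ('b \<Rightarrow> 'b measure) \<Rightarrow> ('b \<Rightarrow> real) \<Rightarrow> real" where
  "dirichlet \<mu> T f = (\<integral> z. (f z - (\<integral> z'. f z' \<partial>T z)) * f z \<partial>\<mu>)"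

definition lpnorm :: "'b measure \<Rightarrow> real \<Rightarrow> ('b \<Rightarrow> real) \<Rightarrow> real" where
  "lpnorm \<mu> r f = (\<integral> z. \<bar>f z\<bar> powr r \<partial>\<mu>) powr (1 / r)"

definition oscnorm :: "'b measure \<Rightarrow> ('b \<Rightarrow> real) \<Rightarrow> real" where
  "oscnorm \<mu> f = real_of_ereal (esssup \<mu> (\<lambda>z. ereal (f z)) + esssup \<mu> (\<lambda>z. ereal (- f z)))"

definition L0_2p :: "'b measure \<Rightarrow> ereal \<Rightarrow> ('b \<Rightarrow> real) \<Rightarrow> bool" where
  "L0_2p \<mu> p f \<longleftrightarrow> f \<in> borel_measurable \<mu> \<and>
     (if p = \<infinity> then esssup \<mu> (\<lambda>z. ereal \<bar>f z\<bar>) < \<infinity>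
      else integrable \<mu> (\<lambda>z. \<bar>f z\<bar> powr (2 * real_of_ereal p))) \<and>
     integrable \<mu> f \<and> (\<integral> z. f z \<partial>\<mu>) = 0"

definition Phi :: "'b measure \<Rightarrow> ereal \<Rightarrow> ('b \<Rightarrow> real) \<Rightarrow> real" where
  "Phi \<mu> p f = (if p = \<infinity> then (oscnorm \<mu> f)\<^sup>2 else 4 * (lpnorm \<mu> (2 * real_of_ereal p) f)\<^sup>2)"

end

theory Submission
  imports Defs
begin

locale pmsetup =
  fixes \<pi> :: "'a measure" and q :: "'a \<Rightarrow> 'a measure" and Q :: "'a \<Rightarrow> real measure"
  assumes P: "prob_space \<pi>"
    and qk: "q \<in> \<pi> \<rightarrow>\<^sub>M prob_algebra \<pi>"
    and Qk: "Q \<in> \<pi> \<rightarrow>\<^sub>M prob_algebra borel"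
    and Qnn: "\<And>x. x \<in> space \<pi> \<Longrightarrow> AE w in Q x. 0 \<le> w"
    and Qint: "\<And>x. x \<in> space \<pi> \<Longrightarrow> integrable (Q x) (\<lambda>w. w)"
    and Q1: "\<And>x. x \<in> space \<pi> \<Longrightarrow> (\<integral> w. w \<partial>Q x) = 1"
    and ac: "absolutely_continuous (prop_joint \<pi> q) (rev_joint \<pi> q)"
begin

abbreviation "E \<equiv> \<pi> \<Otimes>\<^sub>M borel"
abbreviation "PT \<equiv> pitilde \<pi> Q"

lemma Qx: "x \<in> space \<pi> \<Longrightarrow> prob_space (Q x) \<and> sets (Q x) = sets borel"
  using measurable_space[OF Qk] by (auto simp: space_prob_algebra)

lemma qx: "x \<in> space \<pi> \<Longrightarrow> prob_space (q x) \<and> sets (q x) = sets \<pi>"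
  using measurable_space[OF qk] by (auto simp: space_prob_algebra)

lemma space_Qx[simp]: "x \<in> space \<pi> \<Longrightarrow> space (Q x) = UNIV"
proof -
  assume "x \<in> space \<pi>"
  then have "sets (Q x) = sets borel" using Qx by blast
  then have "space (Q x) = space (borel::real measure)" by (rule sets_eq_imp_space_eq)
  then show ?thesis by simp
qed

lemma space_qx[simp]: "x \<in> space \<pi> \<Longrightarrow> space (q x) = space \<pi>"
proof -
  assume "x \<in> space \<pi>"
  then have "sets (q x) = sets \<pi>" using qx by blast
  then show ?thesis by (rule sets_eq_imp_space_eq)
qed

lemma Qk_sub[measurable]: "Q \<in> \<pi> \<rightarrow>\<^sub>M subprob_algebra borel"
  using Qk by (rule measurable_prob_algebraD)

lemma qk_sub[measurable]: "q \<in> \<pi> \<rightarrow>\<^sub>M subprob_algebra \<pi>"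
  using qk by (rule measurable_prob_algebraD)

lemma emeasure_pitilde_x: "x \<in> space \<pi> \<Longrightarrow> A \<in> sets borel \<Longrightarrow>
   emeasure (pitilde_x Q x) A = (\<integral>\<^sup>+w. ennreal w * indicator A w \<partial>Q x)"
  unfolding pitilde_x_def using Qx by (subst emeasure_density) (auto cong: measurable_cong_sets)

lemma nn_pitilde_x: "x \<in> space \<pi> \<Longrightarrow> g \<in> borel_measurable borel \<Longrightarrow>
   (\<integral>\<^sup>+w. g w \<partial>pitilde_x Q x) = (\<integral>\<^sup>+w. ennreal w * g w \<partial>Q x)"
  unfolding pitilde_x_def using Qx by (subst nn_integral_density) (auto cong: measurable_cong_sets)

lemma pitilde_x_prob: "x \<in> space \<pi> \<Longrightarrow> prob_space (pitilde_x Q x) \<and> sets (pitilde_x Q x) = sets borel"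
proof -
  assume x: "x \<in> space \<pi>"
  have "(\<integral>\<^sup>+w. ennreal w \<partial>Q x) = ennreal (\<integral> w. w \<partial>Q x)"
    using Qnn[OF x] Qint[OF x] Qx[OF x] by (subst nn_integral_eq_integral) auto
  then have "emeasure (pitilde_x Q x) UNIV = 1"
    using emeasure_pitilde_x[OF x, of UNIV] Q1[OF x] by simp
  moreover have "sets (pitilde_x Q x) = sets borel"
    unfolding pitilde_x_def using Qx[OF x] by simp
  ultimately show ?thesis
    by (metis prob_spaceI sets_eq_imp_space_eq space_borel)
qed

lemma pitilde_x_k: "pitilde_x Q \<in> \<pi> \<rightarrow>\<^sub>M prob_algebra borel"
proof (rule measurable_prob_algebraI)
  show "x \<in> space \<pi> \<Longrightarrow> prob_space (pitilde_x Q x)" for x using pitilde_x_prob by blast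
  show "pitilde_x Q \<in> \<pi> \<rightarrow>\<^sub>M subprob_algebra borel"
  proof (rule measurable_subprob_algebra)
    show "a \<in> space \<pi> \<Longrightarrow> subprob_space (pitilde_x Q a)" for a
      using pitilde_x_prob prob_space_imp_subprob_space by blast
    show "a \<in> space \<pi> \<Longrightarrow> sets (pitilde_x Q a) = sets borel" for a using pitilde_x_prob by blast
    fix A :: "real set" assume A: "A \<in> sets borel"
    have "(\<lambda>x. \<integral>\<^sup>+w. ennreal w * indicator A w \<partial>Q x) \<in> borel_measurable \<pi>"
      by (rule nn_integral_measurable_subprob_algebra2[where N=borel]) (use A in measurable)
    then show "(\<lambda>a. emeasure (pitilde_x Q a) A) \<in> borel_measurable \<pi>"
      by (rule measurable_cong[THEN iffD1, rotated]) (simp add: emeasure_pitilde_x A)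
  qed
qed

lemma pitilde_x_sub[measurable]: "pitilde_x Q \<in> \<pi> \<rightarrow>\<^sub>M subprob_algebra borel"
  using pitilde_x_k by (rule measurable_prob_algebraD)

lemma Pik: "(\<lambda>x. distr (pitilde_x Q x) E (Pair x)) \<in> \<pi> \<rightarrow>\<^sub>M prob_algebra E"
  by (rule measurable_distr_prob_space2[OF pitilde_x_k]) simp

lemma Pi_prob: "prob_space PT" and sets_Pi[simp, measurable_cong]: "sets PT = sets E"
proof -
  have "\<pi> \<in> space (prob_algebra \<pi>)" using P by (simp add: space_prob_algebra)
  then show "prob_space PT" "sets PT = sets E"
    unfolding pitilde_def using prob_space_bind' sets_bind' Pik by blast+
qed

lemma space_Pi[simp]: "space PT = space E"
  using sets_Pi sets_eq_imp_space_eq by blast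

lemma nn_Pi: assumes g[measurable]: "g \<in> borel_measurable E"
  shows "(\<integral>\<^sup>+z. g z \<partial>PT) = (\<integral>\<^sup>+x. \<integral>\<^sup>+w. ennreal w * g (x, w) \<partial>Q x \<partial>\<pi>)"
proof -
  have "(\<integral>\<^sup>+z. g z \<partial>PT) = (\<integral>\<^sup>+x. \<integral>\<^sup>+z. g z \<partial>distr (pitilde_x Q x) E (Pair x) \<partial>\<pi>)"
    unfolding pitilde_def
    by (rule nn_integral_bind[OF g measurable_prob_algebraD[OF Pik]])
  also have "\<dots> = (\<integral>\<^sup>+x. \<integral>\<^sup>+w. ennreal w * g (x, w) \<partial>Q x \<partial>\<pi>)"
  proof (rule nn_integral_cong)
    fix x assume x: "x \<in> space \<pi>"
    have "(\<integral>\<^sup>+z. g z \<partial>distr (pitilde_x Q x) E (Pair x)) = (\<integral>\<^sup>+w. g (x,w) \<partial>pitilde_x Q x)"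
      using pitilde_x_prob[OF x] x
      by (subst nn_integral_distr) (auto cong: measurable_cong_sets)
    also have "\<dots> = (\<integral>\<^sup>+w. ennreal w * g (x, w) \<partial>Q x)"
      using x by (subst nn_pitilde_x) auto
    finally show "(\<integral>\<^sup>+z. g z \<partial>distr (pitilde_x Q x) E (Pair x)) = (\<integral>\<^sup>+w. ennreal w * g (x, w) \<partial>Q x)" .
  qed
  finally show ?thesis .
qed

end

lemma mh_kernel_sets_emeasure:
  fixes M :: "'b measure"
  assumes z: "z \<in> space M" and Ks: "sets (K z) = sets M"
  shows "sets (mh_kernel M K \<alpha> z) = sets M"
    and "\<alpha> z \<in> borel_measurable M \<Longrightarrow> A \<in> sets M \<Longrightarrow> emeasure (mh_kernel M K \<alpha> z) A =
      (\<integral>\<^sup>+z'. ennreal (\<alpha> z z') * indicator A z' \<partial>K z) + indicator A z * ennreal (1 - (\<integral>z'. \<alpha> z z' \<partial>K z))"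
proof -
  show "sets (mh_kernel M K \<alpha> z) = sets M"
    unfolding mh_kernel_def by (simp add: sets.sigma_sets_eq sets.space_closed sets_measure_of)
  let ?c = "ennreal (1 - (\<integral>z'. \<alpha> z z' \<partial>K z))"
  let ?mu = "\<lambda>A. (\<integral>\<^sup>+z'. ennreal (\<alpha> z z') * indicator A z' \<partial>K z) + indicator A z * ?c"
  assume A: "A \<in> sets M" and am: "\<alpha> z \<in> borel_measurable M"
  have pos: "positive (sets M) ?mu" by (simp add: positive_def)
  have ca: "countably_additive (sets M) ?mu"
  proof (rule countably_additiveI)
    fix F :: "nat \<Rightarrow> 'b set" assume F: "range F \<subseteq> sets M" "disjoint_family F"
    have "(\<Sum>i. ?mu (F i)) = (\<Sum>i. (\<integral>\<^sup>+z'. ennreal (\<alpha> z z') * indicator (F i) z' \<partial>K z)) + (\<Sum>i. indicator (F i) z * ?c)"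
      by (subst suminf_add) (auto intro: summableI)
    also have "(\<Sum>i. (\<integral>\<^sup>+z'. ennreal (\<alpha> z z') * indicator (F i) z' \<partial>K z))
        = (\<integral>\<^sup>+z'. (\<Sum>i. ennreal (\<alpha> z z') * indicator (F i) z') \<partial>K z)"
      by (rule nn_integral_suminf[symmetric]) (use F Ks am in \<open>auto cong: measurable_cong_sets\<close>)
    also have "\<dots> = (\<integral>\<^sup>+z'. ennreal (\<alpha> z z') * indicator (\<Union>i. F i) z' \<partial>K z)"
      using suminf_indicator[OF F(2)] by simp
    also have "(\<Sum>i. indicator (F i) z * ?c) = indicator (\<Union>i. F i) z * ?c"
      using suminf_indicator[OF F(2)] by simp
    finally show "(\<Sum>i. ?mu (F i)) = ?mu (\<Union>i. F i)" .
  qed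
  show "emeasure (mh_kernel M K \<alpha> z) A = ?mu A"
    unfolding mh_kernel_def
    by (rule emeasure_measure_of_sigma[OF _ pos ca A]) (simp add: sets.sigma_algebra_axioms)
qed

lemma mh_kernel_nn:
  fixes M :: "'b measure"
  assumes z: "z \<in> space M" and Ks: "sets (K z) = sets M"
    and am: "\<alpha> z \<in> borel_measurable M"
    and g: "g \<in> borel_measurable M"
  shows "(\<integral>\<^sup>+z'. g z' \<partial>mh_kernel M K \<alpha> z) =
      (\<integral>\<^sup>+z'. ennreal (\<alpha> z z') * g z' \<partial>K z) + g z * ennreal (1 - (\<integral>z'. \<alpha> z z' \<partial>K z))"
  using g
proof -
  note sT = mh_kernel_sets_emeasure(1)[of z M K \<alpha>, OF z Ks]
  note eT = mh_kernel_sets_emeasure(2)[of z M K \<alpha>, OF z Ks am]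
  from g show ?thesis
proof (induct rule: borel_measurable_induct)
  case (cong f g)
  have sp: "space (mh_kernel M K \<alpha> z) = space M" "space (K z) = space M"
    using sT Ks by (auto dest: sets_eq_imp_space_eq)
  have "(\<integral>\<^sup>+z'. f z' \<partial>mh_kernel M K \<alpha> z) = (\<integral>\<^sup>+z'. g z' \<partial>mh_kernel M K \<alpha> z)"
    by (rule nn_integral_cong) (use cong sp in auto)
  moreover have "(\<integral>\<^sup>+z'. ennreal (\<alpha> z z') * f z' \<partial>K z) = (\<integral>\<^sup>+z'. ennreal (\<alpha> z z') * g z' \<partial>K z)"
    by (rule nn_integral_cong) (use cong sp in auto)
  ultimately show ?case using cong z by simp
next
  case (set A)
  then show ?case
    using eT[of A]
    by (subst nn_integral_indicator) (auto simp: sT)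
next
  case (mult u c)
  have m1: "u \<in> borel_measurable (mh_kernel M K \<alpha> z)"
    using mult sT by (simp cong: measurable_cong_sets)
  have m2: "(\<lambda>z'. ennreal (\<alpha> z z') * u z') \<in> borel_measurable (K z)"
    using mult am Ks by (simp cong: measurable_cong_sets)
  have "(\<integral>\<^sup>+z'. c * u z' \<partial>mh_kernel M K \<alpha> z) = c * (\<integral>\<^sup>+z'. u z' \<partial>mh_kernel M K \<alpha> z)"
    by (rule nn_integral_cmult[OF m1])
  moreover have "(\<integral>\<^sup>+z'. ennreal (\<alpha> z z') * (c * u z') \<partial>K z) = c * (\<integral>\<^sup>+z'. ennreal (\<alpha> z z') * u z' \<partial>K z)"
    using nn_integral_cmult[OF m2, of c] by (simp add: ac_simps)
  ultimately show ?case using mult by (simp add: algebra_simps)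
next
  case (add u v)
  have m1: "u \<in> borel_measurable (mh_kernel M K \<alpha> z)" "v \<in> borel_measurable (mh_kernel M K \<alpha> z)"
    using add sT by (simp_all cong: measurable_cong_sets)
  have m2: "(\<lambda>z'. ennreal (\<alpha> z z') * u z') \<in> borel_measurable (K z)"
     "(\<lambda>z'. ennreal (\<alpha> z z') * v z') \<in> borel_measurable (K z)"
    using add am Ks by (simp_all cong: measurable_cong_sets)
  have "(\<integral>\<^sup>+z'. v z' + u z' \<partial>mh_kernel M K \<alpha> z) = (\<integral>\<^sup>+z'. v z' \<partial>mh_kernel M K \<alpha> z) + (\<integral>\<^sup>+z'. u z' \<partial>mh_kernel M K \<alpha> z)"
    using m1 by (intro nn_integral_add) auto
  moreover have "(\<integral>\<^sup>+z'. ennreal (\<alpha> z z') * (v z' + u z') \<partial>K z) =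
     (\<integral>\<^sup>+z'. ennreal (\<alpha> z z') * v z' \<partial>K z) + (\<integral>\<^sup>+z'. ennreal (\<alpha> z z') * u z' \<partial>K z)"
    using m2 by (subst nn_integral_add[symmetric]) (auto simp: distrib_left)
  ultimately show ?case using add by (simp add: algebra_simps)
next
  case (seq U)
  have m1: "\<And>i. U i \<in> borel_measurable (mh_kernel M K \<alpha> z)"
    using seq sT by (simp_all cong: measurable_cong_sets)
  have m2: "\<And>i. (\<lambda>z'. ennreal (\<alpha> z z') * U i z') \<in> borel_measurable (K z)"
    using seq am Ks by (simp_all cong: measurable_cong_sets)
  have inc2: "incseq (\<lambda>i z'. ennreal (\<alpha> z z') * U i z')"
    using seq(4) by (auto simp: incseq_def le_fun_def intro!: mult_left_mono)
  have "(\<integral>\<^sup>+z'. (SUP i. U i) z' \<partial>mh_kernel M K \<alpha> z) = (SUP i. \<integral>\<^sup>+z'. U i z' \<partial>mh_kernel M K \<alpha> z)"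
    using nn_integral_monotone_convergence_SUP[OF seq(4) m1] by (simp add: SUP_apply image_comp)
  also have "\<dots> = (SUP i. (\<integral>\<^sup>+z'. ennreal (\<alpha> z z') * U i z' \<partial>K z) + U i z * ennreal (1 - (\<integral>z'. \<alpha> z z' \<partial>K z)))"
    using seq(3) by simp
  also have "\<dots> = (SUP i. (\<integral>\<^sup>+z'. ennreal (\<alpha> z z') * U i z' \<partial>K z)) + (SUP i. U i z * ennreal (1 - (\<integral>z'. \<alpha> z z' \<partial>K z)))"
  proof (rule ennreal_SUP_add)
    show "incseq (\<lambda>i. \<integral>\<^sup>+z'. ennreal (\<alpha> z z') * U i z' \<partial>K z)"
      using inc2 by (auto simp: incseq_def le_fun_def intro!: nn_integral_mono)
    show "incseq (\<lambda>i. U i z * ennreal (1 - (\<integral>z'. \<alpha> z z' \<partial>K z)))"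
      using seq(4) by (auto simp: incseq_def le_fun_def intro!: mult_right_mono)
  qed
  also have "(SUP i. (\<integral>\<^sup>+z'. ennreal (\<alpha> z z') * U i z' \<partial>K z)) = (\<integral>\<^sup>+z'. (SUP i. ennreal (\<alpha> z z') * U i z') \<partial>K z)"
    using nn_integral_monotone_convergence_SUP[OF inc2 m2] by (simp add: SUP_apply image_comp)
  also have "\<dots> = (\<integral>\<^sup>+z'. ennreal (\<alpha> z z') * (SUP i. U i) z' \<partial>K z)"
    by (simp add: SUP_apply image_comp SUP_mult_left_ennreal)
  also have "(SUP i. U i z * ennreal (1 - (\<integral>z'. \<alpha> z z' \<partial>K z))) = (SUP i. U i) z * ennreal (1 - (\<integral>z'. \<alpha> z z' \<partial>K z))"
    by (simp add: SUP_apply image_comp SUP_mult_right_ennreal)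
  finally show ?case .
qed
qed


lemma mh_kernel_int_nonneg:
  fixes M :: "'b measure" and h :: "'b \<Rightarrow> real"
  assumes z: "z \<in> space M" and Ks: "sets (K z) = sets M"
    and am: "\<alpha> z \<in> borel_measurable M"
    and h: "h \<in> borel_measurable M" "\<And>x. 0 \<le> h x"
    and fin: "(\<integral>\<^sup>+z'. ennreal (\<alpha> z z') * ennreal (h z') \<partial>K z) < \<infinity>"
  shows "integrable (mh_kernel M K \<alpha> z) h"
    and "integrable (K z) (\<lambda>z'. max 0 (\<alpha> z z') * h z')"
    and "(\<integral>z'. h z' \<partial>mh_kernel M K \<alpha> z) =
       (\<integral>z'. max 0 (\<alpha> z z') * h z' \<partial>K z) + h z * max 0 (1 - (\<integral>z'. \<alpha> z z' \<partial>K z))"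
proof -
  let ?c = "1 - (\<integral>z'. \<alpha> z z' \<partial>K z)"
  note sT = mh_kernel_sets_emeasure(1)[of z M K \<alpha>, OF z Ks]
  have hm: "(\<lambda>x. ennreal (h x)) \<in> borel_measurable M" using h by simp
  have nn: "(\<integral>\<^sup>+z'. ennreal (h z') \<partial>mh_kernel M K \<alpha> z) =
      (\<integral>\<^sup>+z'. ennreal (\<alpha> z z') * ennreal (h z') \<partial>K z) + ennreal (h z) * ennreal ?c"
    by (rule mh_kernel_nn[of z M K \<alpha>, OF z Ks am hm])
  have eq1: "(\<integral>\<^sup>+z'. ennreal (\<alpha> z z') * ennreal (h z') \<partial>K z) = (\<integral>\<^sup>+z'. ennreal (max 0 (\<alpha> z z') * h z') \<partial>K z)"
    by (rule nn_integral_cong) (simp add: h ennreal_mult'' ennreal_max_0)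
  have m2: "(\<lambda>z'. max 0 (\<alpha> z z') * h z') \<in> borel_measurable (K z)"
    using am h Ks by (simp cong: measurable_cong_sets)
  show i2: "integrable (K z) (\<lambda>z'. max 0 (\<alpha> z z') * h z')"
    by (rule integrableI_nonneg[OF m2]) (use fin eq1 h in auto)
  have eq2: "(\<integral>\<^sup>+z'. ennreal (max 0 (\<alpha> z z') * h z') \<partial>K z) = ennreal (\<integral>z'. max 0 (\<alpha> z z') * h z' \<partial>K z)"
    by (rule nn_integral_eq_integral[OF i2]) (simp add: h)
  have eq3: "ennreal (h z) * ennreal ?c = ennreal (h z * max 0 ?c)"
    by (simp add: h ennreal_mult' ennreal_max_0)
  have tot: "(\<integral>\<^sup>+z'. ennreal (h z') \<partial>mh_kernel M K \<alpha> z) =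
      ennreal ((\<integral>z'. max 0 (\<alpha> z z') * h z' \<partial>K z) + h z * max 0 ?c)"
    unfolding nn eq1 eq2 eq3
    by (subst ennreal_plus) (auto simp: h intro!: integral_nonneg_AE)
  have hmT: "h \<in> borel_measurable (mh_kernel M K \<alpha> z)" using h sT by (simp cong: measurable_cong_sets)
  show "integrable (mh_kernel M K \<alpha> z) h"
    by (rule integrableI_nonneg[OF hmT]) (use tot h in auto)
  show "(\<integral>z'. h z' \<partial>mh_kernel M K \<alpha> z) =
       (\<integral>z'. max 0 (\<alpha> z z') * h z' \<partial>K z) + h z * max 0 ?c"
  proof -
    have "(\<integral>z'. h z' \<partial>mh_kernel M K \<alpha> z) = enn2real (\<integral>\<^sup>+z'. ennreal (h z') \<partial>mh_kernel M K \<alpha> z)"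
      by (rule integral_eq_nn_integral[OF hmT]) (simp add: h)
    also have "\<dots> = enn2real (ennreal ((\<integral>z'. max 0 (\<alpha> z z') * h z' \<partial>K z) + h z * max 0 ?c))"
      by (simp only: tot)
    also have "\<dots> = (\<integral>z'. max 0 (\<alpha> z z') * h z' \<partial>K z) + h z * max 0 ?c"
      by (rule enn2real_ennreal) (auto simp: h intro!: integral_nonneg_AE)
    finally show ?thesis .
  qed
qed

lemma mh_kernel_int:
  fixes M :: "'b measure" and f :: "'b \<Rightarrow> real"
  assumes z: "z \<in> space M" and Ks: "sets (K z) = sets M"
    and am: "\<alpha> z \<in> borel_measurable M"
    and f: "f \<in> borel_measurable M"
    and fin: "(\<integral>\<^sup>+z'. ennreal (\<alpha> z z') * ennreal \<bar>f z'\<bar> \<partial>K z) < \<infinity>"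
  shows "integrable (mh_kernel M K \<alpha> z) f"
    and "integrable (K z) (\<lambda>z'. max 0 (\<alpha> z z') * f z')"
    and "(\<integral>z'. f z' \<partial>mh_kernel M K \<alpha> z) =
       (\<integral>z'. max 0 (\<alpha> z z') * f z' \<partial>K z) + f z * max 0 (1 - (\<integral>z'. \<alpha> z z' \<partial>K z))"
proof -
  let ?p = "\<lambda>x. max 0 (f x)" and ?n = "\<lambda>x. max 0 (- f x)"
  have finp: "(\<integral>\<^sup>+z'. ennreal (\<alpha> z z') * ennreal (?p z') \<partial>K z) < \<infinity>"
    by (rule le_less_trans[OF _ fin], rule nn_integral_mono) (auto intro!: mult_left_mono)
  have finn: "(\<integral>\<^sup>+z'. ennreal (\<alpha> z z') * ennreal (?n z') \<partial>K z) < \<infinity>"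
    by (rule le_less_trans[OF _ fin], rule nn_integral_mono) (auto intro!: mult_left_mono)
  have mp: "?p \<in> borel_measurable M" and mn: "?n \<in> borel_measurable M" using f by auto
  have pp: "\<And>x. 0 \<le> ?p x" and nn0: "\<And>x. 0 \<le> ?n x" by auto
  note P = mh_kernel_int_nonneg[of z M K \<alpha>, OF z Ks am mp pp finp] and N = mh_kernel_int_nonneg[of z M K \<alpha>, OF z Ks am mn nn0 finn]
  have fe: "f = (\<lambda>x. ?p x - ?n x)" by (auto simp: fun_eq_iff)
  have fe2: "(\<lambda>z'. max 0 (\<alpha> z z') * f z') = (\<lambda>z'. max 0 (\<alpha> z z') * ?p z' - max 0 (\<alpha> z z') * ?n z')"
    by (rule ext) (simp add: max_def algebra_simps)
  show "integrable (mh_kernel M K \<alpha> z) f"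
    by (subst fe) (rule Bochner_Integration.integrable_diff[OF P(1) N(1)])
  show "integrable (K z) (\<lambda>z'. max 0 (\<alpha> z z') * f z')"
    by (subst fe2) (rule Bochner_Integration.integrable_diff[OF P(2) N(2)])
  have "(\<integral>z'. f z' \<partial>mh_kernel M K \<alpha> z) = (\<integral>z'. ?p z' \<partial>mh_kernel M K \<alpha> z) - (\<integral>z'. ?n z' \<partial>mh_kernel M K \<alpha> z)"
    by (subst fe) (rule Bochner_Integration.integral_diff[OF P(1) N(1)])
  also have "\<dots> = ((\<integral>z'. max 0 (\<alpha> z z') * ?p z' \<partial>K z) - (\<integral>z'. max 0 (\<alpha> z z') * ?n z' \<partial>K z))
      + (?p z - ?n z) * max 0 (1 - (\<integral>z'. \<alpha> z z' \<partial>K z))"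
    using P(3) N(3) by (simp add: algebra_simps)
  also have "(\<integral>z'. max 0 (\<alpha> z z') * ?p z' \<partial>K z) - (\<integral>z'. max 0 (\<alpha> z z') * ?n z' \<partial>K z) = (\<integral>z'. max 0 (\<alpha> z z') * f z' \<partial>K z)"
    by (subst fe2, rule Bochner_Integration.integral_diff[symmetric, OF P(2) N(2)])
  also have "?p z - ?n z = f z" by simp
  finally show "(\<integral>z'. f z' \<partial>mh_kernel M K \<alpha> z) =
       (\<integral>z'. max 0 (\<alpha> z z') * f z' \<partial>K z) + f z * max 0 (1 - (\<integral>z'. \<alpha> z z' \<partial>K z))" .
qed

lemma mh_kernel_not_int:
  fixes M :: "'b measure" and f :: "'b \<Rightarrow> real"
  assumes z: "z \<in> space M" and Ks: "sets (K z) = sets M"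
    and am: "\<alpha> z \<in> borel_measurable M"
    and f: "f \<in> borel_measurable M"
    and inf: "\<not> (\<integral>\<^sup>+z'. ennreal (\<alpha> z z') * ennreal \<bar>f z'\<bar> \<partial>K z) < \<infinity>"
  shows "\<not> integrable (mh_kernel M K \<alpha> z) f"
proof
  assume "integrable (mh_kernel M K \<alpha> z) f"
  then have "(\<integral>\<^sup>+z'. ennreal (norm (f z')) \<partial>mh_kernel M K \<alpha> z) < \<infinity>"
    by (simp add: integrable_iff_bounded)
  moreover have "(\<integral>\<^sup>+z'. ennreal (norm (f z')) \<partial>mh_kernel M K \<alpha> z) =
      (\<integral>\<^sup>+z'. ennreal (\<alpha> z z') * ennreal \<bar>f z'\<bar> \<partial>K z) + ennreal \<bar>f z\<bar> * ennreal (1 - (\<integral>z'. \<alpha> z z' \<partial>K z))"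
    using f by (subst mh_kernel_nn[of z M K \<alpha>, OF z Ks am]) auto
  ultimately show False using inf by (simp add: top_unique)
qed

lemma integral_kernel_measurable:
  fixes g :: "'a \<Rightarrow> 'b \<Rightarrow> real"
  assumes K[measurable]: "K \<in> M \<rightarrow>\<^sub>M subprob_algebra N"
    and g[measurable]: "(\<lambda>(x, y). g x y) \<in> borel_measurable (M \<Otimes>\<^sub>M N)"
  shows "(\<lambda>x. \<integral>y. g x y \<partial>K x) \<in> borel_measurable M"
proof -
  have D: "(\<lambda>x. distr (K x) (M \<Otimes>\<^sub>M N) (Pair x)) \<in> M \<rightarrow>\<^sub>M subprob_algebra (M \<Otimes>\<^sub>M N)"
    by (rule measurable_distr2[OF _ K]) simp
  have "(\<lambda>x. \<integral>p. (\<lambda>(x, y). g x y) p \<partial>distr (K x) (M \<Otimes>\<^sub>M N) (Pair x)) \<in> borel_measurable M"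
    by (rule measurable_compose[OF D integral_measurable_subprob_algebra[OF g]])
  then show ?thesis
  proof (rule measurable_cong[THEN iffD1, rotated])
    fix x assume x: "x \<in> space M"
    have s: "sets (K x) = sets N" using measurable_space[OF K x] by (simp add: space_subprob_algebra)
    show "(\<integral>p. (\<lambda>(x, y). g x y) p \<partial>distr (K x) (M \<Otimes>\<^sub>M N) (Pair x)) = (\<integral>y. g x y \<partial>K x)"
      using x s by (subst integral_distr) (auto cong: measurable_cong_sets)
  qed
qed

lemma nn_integral_kernel_measurable:
  assumes K[measurable]: "K \<in> M \<rightarrow>\<^sub>M subprob_algebra N"
    and g[measurable]: "(\<lambda>(x, y). g x y) \<in> borel_measurable (M \<Otimes>\<^sub>M N)"
  shows "(\<lambda>x. \<integral>\<^sup>+y. g x y \<partial>K x) \<in> borel_measurable M"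
  by (rule nn_integral_measurable_subprob_algebra2[OF g K])

lemma mh_kernel_Tf_measurable:
  fixes M :: "'b measure" and f :: "'b \<Rightarrow> real"
  assumes K[measurable]: "K \<in> M \<rightarrow>\<^sub>M subprob_algebra M"
    and am[measurable]: "(\<lambda>(z, z'). \<alpha> z z') \<in> borel_measurable (M \<Otimes>\<^sub>M M)"
    and f[measurable]: "f \<in> borel_measurable M"
  shows "(\<lambda>z. \<integral>z'. f z' \<partial>mh_kernel M K \<alpha> z) \<in> borel_measurable M"
proof -
  let ?F = "\<lambda>z. (\<integral>\<^sup>+z'. ennreal (\<alpha> z z') * ennreal \<bar>f z'\<bar> \<partial>K z)"
  let ?G = "\<lambda>z. if ?F z < \<infinity> then (\<integral>z'. max 0 (\<alpha> z z') * f z' \<partial>K z) + f z * max 0 (1 - (\<integral>z'. \<alpha> z z' \<partial>K z)) else 0"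
  have m1: "?F \<in> borel_measurable M"
    by (rule nn_integral_kernel_measurable[OF K]) measurable
  have m2: "(\<lambda>z. \<integral>z'. max 0 (\<alpha> z z') * f z' \<partial>K z) \<in> borel_measurable M"
    by (rule integral_kernel_measurable[OF K]) measurable
  have m3: "(\<lambda>z. \<integral>z'. \<alpha> z z' \<partial>K z) \<in> borel_measurable M"
    by (rule integral_kernel_measurable[OF K]) measurable
  have "?G \<in> borel_measurable M"
    using m1 m2 m3 by measurable
  then show ?thesis
  proof (rule measurable_cong[THEN iffD1, rotated])
    fix z assume z: "z \<in> space M"
    have Ks: "sets (K z) = sets M" using measurable_space[OF K z] by (simp add: space_subprob_algebra)
    have az: "\<alpha> z \<in> borel_measurable M" using z by measurable
    show "?G z = (\<integral>z'. f z' \<partial>mh_kernel M K \<alpha> z)"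
    proof (cases "?F z < \<infinity>")
      case True
      then show ?thesis using mh_kernel_int(3)[of z M K \<alpha>, OF z Ks az f] by simp
    next
      case False
      then show ?thesis using mh_kernel_not_int[of z M K \<alpha>, OF z Ks az f]
        by (simp add: not_integrable_integral_eq)
    qed
  qed
qed

context pmsetup
begin

definition "Kt = (\<lambda>(x::'a, w::real). q x \<bind> (\<lambda>y. distr (Q y) E (\<lambda>u. (y, u))))"
definition "Kb = (\<lambda>(x::'a, w::real). q x \<bind> (\<lambda>y. distr (pitilde_x Q y) E (\<lambda>u. (y, u))))"
definition "r x y = mh_ratio \<pi> q x y"
definition "aT = (\<lambda>(x::'a, w::real) (y::'a, u::real). min 1 (r x y * (u / w)))"
definition "aB = (\<lambda>(x::'a, w::real) (y::'a, u::real). mh_accept \<pi> q x y)"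

lemma Ptilde_eq: "Ptilde \<pi> q Q = mh_kernel E Kt aT"
  unfolding Ptilde_def Kt_def aT_def r_def ..

lemma Pbar_eq: "Pbar \<pi> q Q = mh_kernel E Kb aB"
  unfolding Pbar_def Kb_def aB_def ..

lemma Qdist_k: "(\<lambda>y. distr (Q y) E (\<lambda>u. (y, u))) \<in> \<pi> \<rightarrow>\<^sub>M prob_algebra E"
  by (rule measurable_distr_prob_space2[OF Qk]) simp

lemma Pdist_k: "(\<lambda>y. distr (pitilde_x Q y) E (\<lambda>u. (y, u))) \<in> \<pi> \<rightarrow>\<^sub>M prob_algebra E"
  by (rule measurable_distr_prob_space2[OF pitilde_x_k]) simp

lemma Kt_k: "Kt \<in> E \<rightarrow>\<^sub>M prob_algebra E"
proof -
  have "(\<lambda>x. q x \<bind> (\<lambda>y. distr (Q y) E (\<lambda>u. (y, u)))) \<in> \<pi> \<rightarrow>\<^sub>M prob_algebra E"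
    by (rule measurable_bind_prob_space[OF qk Qdist_k])
  then have "(\<lambda>z. q (fst z) \<bind> (\<lambda>y. distr (Q y) E (\<lambda>u. (y, u)))) \<in> E \<rightarrow>\<^sub>M prob_algebra E"
    by (rule measurable_compose[OF measurable_fst])
  then show ?thesis unfolding Kt_def by (simp add: case_prod_beta')
qed

lemma Kb_k: "Kb \<in> E \<rightarrow>\<^sub>M prob_algebra E"
proof -
  have "(\<lambda>x. q x \<bind> (\<lambda>y. distr (pitilde_x Q y) E (\<lambda>u. (y, u)))) \<in> \<pi> \<rightarrow>\<^sub>M prob_algebra E"
    by (rule measurable_bind_prob_space[OF qk Pdist_k])
  then have "(\<lambda>z. q (fst z) \<bind> (\<lambda>y. distr (pitilde_x Q y) E (\<lambda>u. (y, u)))) \<in> E \<rightarrow>\<^sub>M prob_algebra E"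
    by (rule measurable_compose[OF measurable_fst])
  then show ?thesis unfolding Kb_def by (simp add: case_prod_beta')
qed

lemma Kt_sub[measurable]: "Kt \<in> E \<rightarrow>\<^sub>M subprob_algebra E"
  using Kt_k by (rule measurable_prob_algebraD)
lemma Kb_sub[measurable]: "Kb \<in> E \<rightarrow>\<^sub>M subprob_algebra E"
  using Kb_k by (rule measurable_prob_algebraD)

lemma Kt_z: "z \<in> space E \<Longrightarrow> prob_space (Kt z) \<and> sets (Kt z) = sets E"
  using measurable_space[OF Kt_k] by (auto simp: space_prob_algebra)
lemma Kb_z: "z \<in> space E \<Longrightarrow> prob_space (Kb z) \<and> sets (Kb z) = sets E"
  using measurable_space[OF Kb_k] by (auto simp: space_prob_algebra)

lemma nn_Kt: assumes x: "x \<in> space \<pi>" and g[measurable]: "g \<in> borel_measurable E"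
  shows "(\<integral>\<^sup>+z'. g z' \<partial>Kt (x, w)) = (\<integral>\<^sup>+y. \<integral>\<^sup>+u. g (y, u) \<partial>Q y \<partial>q x)"
proof -
  have "(\<integral>\<^sup>+z'. g z' \<partial>Kt (x, w)) = (\<integral>\<^sup>+y. \<integral>\<^sup>+z'. g z' \<partial>distr (Q y) E (\<lambda>u. (y, u)) \<partial>q x)"
    unfolding Kt_def case_prod_conv
  proof (rule nn_integral_bind[OF g])
    have "sets (q x) = sets \<pi>" using qx[OF x] by blast
    then show "(\<lambda>y. distr (Q y) E (Pair y)) \<in> q x \<rightarrow>\<^sub>M subprob_algebra E"
      using measurable_prob_algebraD[OF Qdist_k] by (simp cong: measurable_cong_sets)
  qed
  also have "\<dots> = (\<integral>\<^sup>+y. \<integral>\<^sup>+u. g (y, u) \<partial>Q y \<partial>q x)"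
  proof (rule nn_integral_cong)
    fix y assume "y \<in> space (q x)"
    then have y: "y \<in> space \<pi>" using x by simp
    show "(\<integral>\<^sup>+z'. g z' \<partial>distr (Q y) E (\<lambda>u. (y, u))) = (\<integral>\<^sup>+u. g (y, u) \<partial>Q y)"
      using Qx[OF y] y by (subst nn_integral_distr) (auto cong: measurable_cong_sets)
  qed
  finally show ?thesis .
qed

lemma nn_Kb: assumes x: "x \<in> space \<pi>" and g[measurable]: "g \<in> borel_measurable E"
  shows "(\<integral>\<^sup>+z'. g z' \<partial>Kb (x, w)) = (\<integral>\<^sup>+y. \<integral>\<^sup>+u. ennreal u * g (y, u) \<partial>Q y \<partial>q x)"
proof -
  have "(\<integral>\<^sup>+z'. g z' \<partial>Kb (x, w)) = (\<integral>\<^sup>+y. \<integral>\<^sup>+z'. g z' \<partial>distr (pitilde_x Q y) E (\<lambda>u. (y, u)) \<partial>q x)"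
    unfolding Kb_def case_prod_conv
  proof (rule nn_integral_bind[OF g])
    have "sets (q x) = sets \<pi>" using qx[OF x] by blast
    then show "(\<lambda>y. distr (pitilde_x Q y) E (Pair y)) \<in> q x \<rightarrow>\<^sub>M subprob_algebra E"
      using measurable_prob_algebraD[OF Pdist_k] by (simp cong: measurable_cong_sets)
  qed
  also have "\<dots> = (\<integral>\<^sup>+y. \<integral>\<^sup>+u. ennreal u * g (y, u) \<partial>Q y \<partial>q x)"
  proof (rule nn_integral_cong)
    fix y assume "y \<in> space (q x)"
    then have y: "y \<in> space \<pi>" using x by simp
    have "(\<integral>\<^sup>+z'. g z' \<partial>distr (pitilde_x Q y) E (\<lambda>u. (y, u))) = (\<integral>\<^sup>+u. g (y, u) \<partial>pitilde_x Q y)"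
      using pitilde_x_prob[OF y] y by (subst nn_integral_distr) (auto cong: measurable_cong_sets)
    also have "\<dots> = (\<integral>\<^sup>+u. ennreal u * g (y, u) \<partial>Q y)"
      using y by (subst nn_pitilde_x) auto
    finally show "(\<integral>\<^sup>+z'. g z' \<partial>distr (pitilde_x Q y) E (\<lambda>u. (y, u))) = (\<integral>\<^sup>+u. ennreal u * g (y, u) \<partial>Q y)" .
  qed
  finally show ?thesis .
qed

abbreviation "mu \<equiv> prop_joint \<pi> q"
abbreviation "nu \<equiv> rev_joint \<pi> q"

lemma mudist_k: "(\<lambda>x. distr (q x) (\<pi> \<Otimes>\<^sub>M \<pi>) (Pair x)) \<in> \<pi> \<rightarrow>\<^sub>M prob_algebra (\<pi> \<Otimes>\<^sub>M \<pi>)"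
  by (rule measurable_distr_prob_space2[OF qk]) simp

lemma mu_prob: "prob_space mu" and sets_mu[simp, measurable_cong]: "sets mu = sets (\<pi> \<Otimes>\<^sub>M \<pi>)"
proof -
  have "\<pi> \<in> space (prob_algebra \<pi>)" using P by (simp add: space_prob_algebra)
  then show "prob_space mu" "sets mu = sets (\<pi> \<Otimes>\<^sub>M \<pi>)"
    unfolding prop_joint_def using prob_space_bind' sets_bind' mudist_k by blast+
qed

lemma space_mu[simp]: "space mu = space (\<pi> \<Otimes>\<^sub>M \<pi>)"
  using sets_mu sets_eq_imp_space_eq by blast

lemma nn_mu: assumes g[measurable]: "g \<in> borel_measurable (\<pi> \<Otimes>\<^sub>M \<pi>)"
  shows "(\<integral>\<^sup>+z. g z \<partial>mu) = (\<integral>\<^sup>+x. \<integral>\<^sup>+y. g (x, y) \<partial>q x \<partial>\<pi>)"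
proof -
  have "(\<integral>\<^sup>+z. g z \<partial>mu) = (\<integral>\<^sup>+x. \<integral>\<^sup>+z. g z \<partial>distr (q x) (\<pi> \<Otimes>\<^sub>M \<pi>) (Pair x) \<partial>\<pi>)"
    unfolding prop_joint_def
    by (rule nn_integral_bind[OF g measurable_prob_algebraD[OF mudist_k]])
  also have "\<dots> = (\<integral>\<^sup>+x. \<integral>\<^sup>+y. g (x, y) \<partial>q x \<partial>\<pi>)"
  proof (rule nn_integral_cong)
    fix x assume x: "x \<in> space \<pi>"
    show "(\<integral>\<^sup>+z. g z \<partial>distr (q x) (\<pi> \<Otimes>\<^sub>M \<pi>) (Pair x)) = (\<integral>\<^sup>+y. g (x, y) \<partial>q x)"
      using qx[OF x] x by (subst nn_integral_distr) (auto cong: measurable_cong_sets)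
  qed
  finally show ?thesis .
qed

lemma r_meas[measurable]: "(\<lambda>(x, y). r x y) \<in> borel_measurable (\<pi> \<Otimes>\<^sub>M \<pi>)"
proof -
  have "RN_deriv mu nu \<in> borel_measurable (\<pi> \<Otimes>\<^sub>M \<pi>)"
    using borel_measurable_RN_deriv[of mu nu] by (simp cong: measurable_cong_sets)
  then have "(\<lambda>p. enn2real (RN_deriv mu nu p)) \<in> borel_measurable (\<pi> \<Otimes>\<^sub>M \<pi>)" by measurable
  then show ?thesis unfolding r_def mh_ratio_def by (simp add: case_prod_beta')
qed

lemma r_nonneg: "0 \<le> r x y" unfolding r_def mh_ratio_def by simp

lemma aT_meas[measurable]: "(\<lambda>(z, z'). aT z z') \<in> borel_measurable (E \<Otimes>\<^sub>M E)"
proof -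
  have "(\<lambda>p. min 1 (r (fst (fst p)) (fst (snd p)) * (snd (snd p) / snd (fst p)))) \<in> borel_measurable (E \<Otimes>\<^sub>M E)"
  proof -
    have "(\<lambda>p. r (fst (fst p)) (fst (snd p))) \<in> borel_measurable (E \<Otimes>\<^sub>M E)"
      using measurable_compose[OF _ r_meas, of "\<lambda>p. (fst (fst p), fst (snd p))"] by (simp add: case_prod_beta')
    then show ?thesis by measurable
  qed
  then show ?thesis unfolding aT_def by (simp add: case_prod_beta')
qed

lemma ab_meas[measurable]: "(\<lambda>(z, z'). aB z z') \<in> borel_measurable (E \<Otimes>\<^sub>M E)"
proof -
  have "(\<lambda>p. r (fst (fst p)) (fst (snd p))) \<in> borel_measurable (E \<Otimes>\<^sub>M E)"
    using measurable_compose[OF _ r_meas, of "\<lambda>p. (fst (fst p), fst (snd p))"] by (simp add: case_prod_beta')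
  then have "(\<lambda>p. min 1 (r (fst (fst p)) (fst (snd p)))) \<in> borel_measurable (E \<Otimes>\<^sub>M E)" by measurable
  then show ?thesis unfolding aB_def mh_accept_def r_def by (simp add: case_prod_beta')
qed

end

lemma nn_swap_prob:
  assumes "prob_space A" "prob_space B" and f: "case_prod f \<in> borel_measurable (A \<Otimes>\<^sub>M B)"
  shows "(\<integral>\<^sup>+y. \<integral>\<^sup>+x. f x y \<partial>A \<partial>B) = (\<integral>\<^sup>+x. \<integral>\<^sup>+y. f x y \<partial>B \<partial>A)"
proof -
  interpret A: prob_space A by fact
  interpret B: prob_space B by fact
  interpret pair_sigma_finite A B by unfold_locales
  show ?thesis by (rule Fubini'[OF f])
qed

context pmsetup
begin

abbreviation "PP \<equiv> \<pi> \<Otimes>\<^sub>M \<pi>"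
definition "sw = (\<lambda>(x::'a, y::'a). (y, x))"

lemma sw_meas[measurable]: "sw \<in> PP \<rightarrow>\<^sub>M PP"
  unfolding sw_def by measurable

lemma sw_sw[simp]: "sw (sw z) = z" by (simp add: sw_def split: prod.splits)

lemma nu_def': "nu = distr mu PP sw"
  unfolding rev_joint_def sw_def ..

lemma sets_nu[simp, measurable_cong]: "sets nu = sets PP" by (simp add: nu_def')
lemma space_nu[simp]: "space nu = space PP" by (simp add: nu_def')

lemma sw_space: "z \<in> space PP \<Longrightarrow> sw z \<in> space PP"
  using measurable_space[OF sw_meas] by blast

lemma distr_nu: "distr nu PP sw = mu"
proof -
  have "distr nu PP sw = distr mu PP (sw \<circ> sw)"
    unfolding nu_def' by (rule distr_distr) (auto cong: measurable_cong_sets)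
  also have "\<dots> = distr mu PP (\<lambda>x. x)"
    by (rule distr_cong) auto
  also have "\<dots> = mu" by (rule distr_id2) simp
  finally show ?thesis .
qed

lemma ac2: "absolutely_continuous nu mu"
  unfolding absolutely_continuous_def
proof
  fix A assume A: "A \<in> null_sets nu"
  then have As: "A \<in> sets PP" and nA: "emeasure nu A = 0" by auto
  let ?B = "sw -` A \<inter> space PP"
  have Bs: "?B \<in> sets PP" using As by measurable
  have "emeasure mu ?B = 0" using nA As unfolding nu_def' by (simp add: emeasure_distr)
  then have "?B \<in> null_sets mu" using Bs by auto
  then have "?B \<in> null_sets nu" using ac unfolding absolutely_continuous_def by blast
  then have "emeasure nu ?B = 0" by auto
  then have "emeasure mu (sw -` ?B \<inter> space PP) = 0" using Bs unfolding nu_def' by (simp add: emeasure_distr)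
  moreover have "sw -` ?B \<inter> space PP = A"
    using sets.sets_into_space[OF As] sw_space by (auto simp: sw_def space_pair_measure)
  ultimately show "A \<in> null_sets mu" using As by auto
qed

definition "rr = RN_deriv mu nu"
definition "ss = RN_deriv nu mu"

lemma rr_meas[measurable]: "rr \<in> borel_measurable PP"
  unfolding rr_def using borel_measurable_RN_deriv[of mu nu] by (simp cong: measurable_cong_sets)
lemma ss_meas[measurable]: "ss \<in> borel_measurable PP"
  unfolding ss_def using borel_measurable_RN_deriv[of nu mu] by (simp cong: measurable_cong_sets)

lemma nu_prob: "prob_space nu"
  unfolding nu_def' by (rule prob_space.prob_space_distr[OF mu_prob]) (simp cong: measurable_cong_sets)

lemma dens_rr: "density mu rr = nu"
proof -
  interpret prob_space mu by (rule mu_prob)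
  show ?thesis unfolding rr_def by (rule density_RN_deriv[OF ac]) simp
qed

lemma dens_ss: "density nu ss = mu"
proof -
  interpret prob_space nu by (rule nu_prob)
  show ?thesis unfolding ss_def by (rule density_RN_deriv[OF ac2]) simp
qed

lemma rr_ss: "AE z in mu. rr z * ss z = 1"
proof -
  interpret prob_space mu by (rule mu_prob)
  have m1: "rr \<in> borel_measurable mu" "ss \<in> borel_measurable mu" by (simp_all cong: measurable_cong_sets)
  have "density mu (\<lambda>z. rr z * ss z) = density (density mu rr) ss"
    by (rule density_density_eq[symmetric]) (use m1 in auto)
  also have "\<dots> = mu" using dens_rr dens_ss by simp
  also have "\<dots> = density mu (\<lambda>_. 1)" by (simp add: density_1)
  finally show ?thesis
    using density_unique_iff[of "\<lambda>z. rr z * ss z" "\<lambda>_. 1"] m1 by simp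
qed

lemma ss_sw: "AE z in mu. ss (sw z) = rr z"
proof -
  interpret prob_space mu by (rule mu_prob)
  have "AE x in mu. RN_deriv (distr mu PP sw) (distr nu PP sw) (sw x) = RN_deriv mu nu x"
  proof (rule RN_deriv_distr)
    show "sw \<in> mu \<rightarrow>\<^sub>M PP" "sw \<in> PP \<rightarrow>\<^sub>M mu" by (simp_all cong: measurable_cong_sets)
    show "\<forall>x\<in>space mu. sw (sw x) = x" by simp
    show "absolutely_continuous (distr mu PP sw) (distr nu PP sw)"
      using ac2 by (simp add: distr_nu flip: nu_def')
    show "sets nu = sets mu" by simp
  qed
  then show ?thesis by (simp add: distr_nu rr_def ss_def flip: nu_def')
qed

lemma rr_sw: "AE z in mu. rr (sw z) * ss (sw z) = 1"
proof -
  have "AE z in nu. rr z * ss z = 1"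
    by (rule absolutely_continuous_AE[OF _ ac rr_ss]) simp
  then show ?thesis unfolding nu_def'
    by (subst (asm) AE_distr_iff) (auto cong: measurable_cong_sets)
qed

lemma rr_inv: "AE z in mu. rr z * rr (sw z) = 1"
  using rr_sw ss_sw by eventually_elim (simp add: mult.commute)

lemma r_rr: "r x y = enn2real (rr (x, y))"
  unfolding r_def mh_ratio_def rr_def ..

lemma r_inv: "AE z in mu. 0 < r (fst z) (snd z) \<and> r (snd z) (fst z) = 1 / r (fst z) (snd z)
    \<and> rr z = ennreal (r (fst z) (snd z))"
  using rr_inv
proof eventually_elim
  case (elim z)
  obtain x y where z: "z = (x, y)" by (cases z)
  have s: "sw z = (y, x)" by (simp add: z sw_def)
  have f1: "rr z \<noteq> \<infinity>" "rr (sw z) \<noteq> \<infinity>" "rr z \<noteq> 0" "rr (sw z) \<noteq> 0"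
    using elim by (auto simp: ennreal_mult_eq_top_iff ennreal_top_mult mult_eq_0_iff)
       (metis ennreal_mult_top ennreal_top_neq_one ennreal_top_mult mult.commute zero_neq_one)+
  obtain a where a: "rr z = ennreal a" "0 \<le> a" using f1(1) by (cases "rr z") auto
  obtain b where b: "rr (sw z) = ennreal b" "0 \<le> b" using f1(2) by (cases "rr (sw z)") auto
  have ab: "a * b = 1" using elim a b by (simp flip: ennreal_mult)
  have "0 < a" using a f1(3) by (auto simp: less_le)
  then show ?case using a b ab z s
    by (auto simp: r_rr field_simps)
qed

end

context pmsetup
begin

lemma Q_fst_k[measurable]: "(\<lambda>p. Q (fst p)) \<in> (N \<Otimes>\<^sub>M \<pi>) \<rightarrow>\<^sub>M subprob_algebra borel \<Longrightarrow> True" by simp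

lemma kern_snd: "(\<lambda>p. Q (snd p)) \<in> (N \<Otimes>\<^sub>M \<pi>) \<rightarrow>\<^sub>M subprob_algebra borel"
  by (rule measurable_compose[OF measurable_snd Qk_sub])

lemma kern_fst: "(\<lambda>p. Q (fst p)) \<in> (\<pi> \<Otimes>\<^sub>M N) \<rightarrow>\<^sub>M subprob_algebra borel"
  by (rule measurable_compose[OF measurable_fst Qk_sub])

lemma kern_q_fst: "(\<lambda>p. q (fst p)) \<in> (\<pi> \<Otimes>\<^sub>M N) \<rightarrow>\<^sub>M subprob_algebra \<pi>"
  by (rule measurable_compose[OF measurable_fst qk_sub])

lemma meas_G:
  assumes phi: "(\<lambda>((z, w), u). \<phi> z w u) \<in> borel_measurable ((PP \<Otimes>\<^sub>M borel) \<Otimes>\<^sub>M borel)"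
  shows "(\<lambda>z. \<integral>\<^sup>+w. \<integral>\<^sup>+u. \<phi> z w u \<partial>Q (snd z) \<partial>Q (fst z)) \<in> borel_measurable PP"
proof -
  have k1: "(\<lambda>p. Q (snd (fst p))) \<in> (PP \<Otimes>\<^sub>M borel) \<rightarrow>\<^sub>M subprob_algebra borel"
    by (rule measurable_compose[OF measurable_fst kern_snd])
  have "(\<lambda>p. \<integral>\<^sup>+u. (\<lambda>p u. \<phi> (fst p) (snd p) u) p u \<partial>Q (snd (fst p))) \<in> borel_measurable (PP \<Otimes>\<^sub>M borel)"
    by (rule nn_integral_kernel_measurable[OF k1]) (use phi in \<open>simp add: case_prod_beta'\<close>)
  then have i: "(\<lambda>(z, w). \<integral>\<^sup>+u. \<phi> z w u \<partial>Q (snd z)) \<in> borel_measurable (PP \<Otimes>\<^sub>M borel)"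
    by (simp add: case_prod_beta')
  show ?thesis
    by (rule nn_integral_kernel_measurable[OF kern_fst i])
qed

lemma meas_inner_x:
  assumes x: "x \<in> space \<pi>"
    and phi: "(\<lambda>((w, y), u). \<phi> w y u) \<in> borel_measurable ((borel \<Otimes>\<^sub>M \<pi>) \<Otimes>\<^sub>M borel)"
  shows "(\<lambda>(w, y). \<integral>\<^sup>+u. \<phi> w y u \<partial>Q y) \<in> borel_measurable (Q x \<Otimes>\<^sub>M q x)"
proof -
  have "(\<lambda>p. \<integral>\<^sup>+u. (\<lambda>p u. \<phi> (fst p) (snd p) u) p u \<partial>Q (snd p)) \<in> borel_measurable (borel \<Otimes>\<^sub>M \<pi>)"
    by (rule nn_integral_kernel_measurable[OF kern_snd]) (use phi in \<open>simp add: case_prod_beta'\<close>)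
  moreover have "sets (Q x \<Otimes>\<^sub>M q x) = sets (borel \<Otimes>\<^sub>M \<pi>)"
    using Qx[OF x] qx[OF x] by (intro sets_pair_measure_cong) auto
  ultimately show ?thesis by (simp add: case_prod_beta' cong: measurable_cong_sets)
qed

definition "Ig W h = (\<integral>\<^sup>+x. \<integral>\<^sup>+w. \<integral>\<^sup>+y. \<integral>\<^sup>+u. W w u (r x y) * h ((x, w), (y, u)) \<partial>Q y \<partial>q x \<partial>Q x \<partial>\<pi>)"
definition "Gf W h z = (\<integral>\<^sup>+w. \<integral>\<^sup>+u. W w u (r (fst z) (snd z)) * h ((fst z, w), (snd z, u)) \<partial>Q (snd z) \<partial>Q (fst z))"

lemma r_comp[measurable]:
  assumes "a \<in> M \<rightarrow>\<^sub>M \<pi>" "b \<in> M \<rightarrow>\<^sub>M \<pi>"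
  shows "(\<lambda>t. r (a t) (b t)) \<in> borel_measurable M"
  using measurable_compose[OF measurable_Pair[OF assms] r_meas] by simp

lemma W_comp:
  assumes Wm: "(\<lambda>p. W (fst p) (fst (snd p)) (snd (snd p))) \<in> borel_measurable (borel \<Otimes>\<^sub>M (borel \<Otimes>\<^sub>M borel))"
    and "a \<in> borel_measurable M" "b \<in> borel_measurable M" "c \<in> borel_measurable M"
  shows "(\<lambda>t. W (a t) (b t) (c t)) \<in> borel_measurable M"
  using measurable_compose[OF measurable_Pair[OF assms(2) measurable_Pair[OF assms(3,4)]] Wm] by simp

lemma Ig_mu:
  assumes Wm: "(\<lambda>p. W (fst p) (fst (snd p)) (snd (snd p))) \<in> borel_measurable (borel \<Otimes>\<^sub>M (borel \<Otimes>\<^sub>M borel))"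
    and h[measurable]: "h \<in> borel_measurable (E \<Otimes>\<^sub>M E)"
  shows "Ig W h = (\<integral>\<^sup>+z. Gf W h z \<partial>mu)"
proof -
  have "Ig W h = (\<integral>\<^sup>+x. \<integral>\<^sup>+y. \<integral>\<^sup>+w. \<integral>\<^sup>+u. W w u (r x y) * h ((x, w), (y, u)) \<partial>Q y \<partial>Q x \<partial>q x \<partial>\<pi>)"
    unfolding Ig_def
  proof (rule nn_integral_cong)
    fix x assume x: "x \<in> space \<pi>"
    have m: "(\<lambda>(w, y). \<integral>\<^sup>+u. W w u (r x y) * h ((x, w), (y, u)) \<partial>Q y) \<in> borel_measurable (Q x \<Otimes>\<^sub>M q x)"
    proof (rule meas_inner_x[OF x])
      have "(\<lambda>p. W (fst (fst p)) (snd p) (r x (snd (fst p))) * h ((x, fst (fst p)), (snd (fst p), snd p)))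
          \<in> borel_measurable ((borel \<Otimes>\<^sub>M \<pi>) \<Otimes>\<^sub>M borel)"
        using x by (intro borel_measurable_times_ennreal W_comp[OF Wm]) measurable
      then show "(\<lambda>((w, y), u). W w u (r x y) * h ((x, w), (y, u))) \<in> borel_measurable ((borel \<Otimes>\<^sub>M \<pi>) \<Otimes>\<^sub>M borel)"
        by (simp add: case_prod_beta')
    qed
    show "(\<integral>\<^sup>+w. \<integral>\<^sup>+y. \<integral>\<^sup>+u. W w u (r x y) * h ((x, w), (y, u)) \<partial>Q y \<partial>q x \<partial>Q x) =
          (\<integral>\<^sup>+y. \<integral>\<^sup>+w. \<integral>\<^sup>+u. W w u (r x y) * h ((x, w), (y, u)) \<partial>Q y \<partial>Q x \<partial>q x)"
      using nn_swap_prob[OF _ _ m] Qx[OF x] qx[OF x] by simp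
  qed
  also have "\<dots> = (\<integral>\<^sup>+z. Gf W h z \<partial>mu)"
  proof -
    have mG: "Gf W h \<in> borel_measurable PP"
      unfolding Gf_def
    proof (rule meas_G)
      have "(\<lambda>p. W (snd (fst p)) (snd p) (r (fst (fst (fst p))) (snd (fst (fst p)))) *
              h ((fst (fst (fst p)), snd (fst p)), (snd (fst (fst p)), snd p))) \<in> borel_measurable ((PP \<Otimes>\<^sub>M borel) \<Otimes>\<^sub>M borel)"
        by (intro borel_measurable_times_ennreal W_comp[OF Wm]) measurable
      then show "(\<lambda>((z, w), u). W w u (r (fst z) (snd z)) * h ((fst z, w), (snd z, u))) \<in> borel_measurable ((PP \<Otimes>\<^sub>M borel) \<Otimes>\<^sub>M borel)"
        by (simp add: case_prod_beta')
    qed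
    show ?thesis using nn_mu[OF mG] by (simp add: Gf_def)
  qed
  finally show ?thesis .
qed


lemma mu_rr:
  assumes F[measurable]: "F \<in> borel_measurable PP"
  shows "(\<integral>\<^sup>+z. F z \<partial>mu) = (\<integral>\<^sup>+z. rr z * F (sw z) \<partial>mu)"
proof -
  interpret prob_space mu by (rule mu_prob)
  have "(\<integral>\<^sup>+z. rr z * F (sw z) \<partial>mu) = (\<integral>\<^sup>+z. F (sw z) \<partial>nu)"
    unfolding rr_def by (rule RN_deriv_nn_integral[OF ac, symmetric]) (simp_all cong: measurable_cong_sets)
  also have "\<dots> = (\<integral>\<^sup>+z. F (sw (sw z)) \<partial>mu)"
    unfolding nu_def' by (subst nn_integral_distr) (simp_all cong: measurable_cong_sets)
  finally show ?thesis by simp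
qed

lemma Ig_sym:
  assumes Wm: "(\<lambda>p. W (fst p) (fst (snd p)) (snd (snd p))) \<in> borel_measurable (borel \<Otimes>\<^sub>M (borel \<Otimes>\<^sub>M borel))"
    and Wsym: "\<And>w u \<rho>. 0 \<le> w \<Longrightarrow> 0 \<le> u \<Longrightarrow> 0 < \<rho> \<Longrightarrow> ennreal \<rho> * W w u (1 / \<rho>) = W u w \<rho>"
    and h[measurable]: "h \<in> borel_measurable (E \<Otimes>\<^sub>M E)"
  shows "Ig W (\<lambda>(z, z'). h (z', z)) = Ig W h"
proof -
  let ?h = "\<lambda>(z, z'). h (z', z)"
  have h'[measurable]: "?h \<in> borel_measurable (E \<Otimes>\<^sub>M E)" by measurable
  have mG: "Gf W ?h \<in> borel_measurable PP"
    unfolding Gf_def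
  proof (rule meas_G)
    have "(\<lambda>p. W (snd (fst p)) (snd p) (r (fst (fst (fst p))) (snd (fst (fst p)))) *
            ?h ((fst (fst (fst p)), snd (fst p)), (snd (fst (fst p)), snd p))) \<in> borel_measurable ((PP \<Otimes>\<^sub>M borel) \<Otimes>\<^sub>M borel)"
      by (intro borel_measurable_times_ennreal W_comp[OF Wm]) measurable
    then show "(\<lambda>((z, w), u). W w u (r (fst z) (snd z)) * ?h ((fst z, w), (snd z, u))) \<in> borel_measurable ((PP \<Otimes>\<^sub>M borel) \<Otimes>\<^sub>M borel)"
      by (simp add: case_prod_beta')
  qed
  have "Ig W ?h = (\<integral>\<^sup>+z. Gf W ?h z \<partial>mu)" by (rule Ig_mu[OF Wm h'])
  also have "\<dots> = (\<integral>\<^sup>+z. rr z * Gf W ?h (sw z) \<partial>mu)" by (rule mu_rr[OF mG])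
  also have "\<dots> = (\<integral>\<^sup>+z. Gf W h z \<partial>mu)"
  proof (rule nn_integral_cong_AE)
    show "AE z in mu. rr z * Gf W ?h (sw z) = Gf W h z"
      using r_inv
    proof (rule AE_mp[OF _ AE_I2[OF impI]])
      fix z assume zs: "z \<in> space mu"
        and R: "0 < r (fst z) (snd z) \<and> r (snd z) (fst z) = 1 / r (fst z) (snd z) \<and> rr z = ennreal (r (fst z) (snd z))"
      obtain x y where z: "z = (x, y)" by (cases z)
      have x: "x \<in> space \<pi>" and y: "y \<in> space \<pi>" using zs z by (auto simp: space_pair_measure)
      define \<rho> where "\<rho> = r x y"
      have \<rho>: "0 < \<rho>" "r y x = 1 / \<rho>" "rr z = ennreal \<rho>" using R z \<rho>_def by auto
      have mQ: "sets (Q x) = sets borel" "sets (Q y) = sets borel" using Qx x y by auto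
      have m2: "(\<lambda>(u, w). W w u (1 / \<rho>) * h ((x, u), (y, w))) \<in> borel_measurable (Q x \<Otimes>\<^sub>M Q y)"
      proof -
        have "(\<lambda>p. W (snd p) (fst p) (1 / \<rho>) * h ((x, fst p), (y, snd p))) \<in> borel_measurable (borel \<Otimes>\<^sub>M borel)"
          using x y by (intro borel_measurable_times_ennreal W_comp[OF Wm]) measurable
        moreover have "sets (Q x \<Otimes>\<^sub>M Q y) = sets (borel \<Otimes>\<^sub>M borel)"
          using mQ by (intro sets_pair_measure_cong) auto
        ultimately show ?thesis by (simp add: case_prod_beta' cong: measurable_cong_sets)
      qed
      have m3: "\<And>u. (\<lambda>w. W w u (1 / \<rho>) * h ((x, u), (y, w))) \<in> borel_measurable (Q y)"
      proof -
        fix u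
        have "(\<lambda>w. W w u (1 / \<rho>) * h ((x, u), (y, w))) \<in> borel_measurable borel"
          using x y by (intro borel_measurable_times_ennreal W_comp[OF Wm]) measurable
        then show "(\<lambda>w. W w u (1 / \<rho>) * h ((x, u), (y, w))) \<in> borel_measurable (Q y)"
          using mQ(2) by (simp cong: measurable_cong_sets)
      qed
      have m4: "(\<lambda>u. \<integral>\<^sup>+w. W w u (1 / \<rho>) * h ((x, u), (y, w)) \<partial>Q y) \<in> borel_measurable (Q x)"
      proof -
        interpret Qy: prob_space "Q y" using Qx[OF y] by blast
        show ?thesis using Qy.borel_measurable_nn_integral_fst[OF m2] by simp
      qed
      have "Gf W ?h (sw z) = (\<integral>\<^sup>+w. \<integral>\<^sup>+u. W w u (1 / \<rho>) * h ((x, u), (y, w)) \<partial>Q x \<partial>Q y)"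
        using \<rho> by (simp add: Gf_def z sw_def)
      also have "\<dots> = (\<integral>\<^sup>+u. \<integral>\<^sup>+w. W w u (1 / \<rho>) * h ((x, u), (y, w)) \<partial>Q y \<partial>Q x)"
        by (rule nn_swap_prob[OF _ _ m2]) (use Qx x y in auto)
      finally have "rr z * Gf W ?h (sw z) = ennreal \<rho> * (\<integral>\<^sup>+u. \<integral>\<^sup>+w. W w u (1 / \<rho>) * h ((x, u), (y, w)) \<partial>Q y \<partial>Q x)"
        using \<rho> by simp
      also have "\<dots> = (\<integral>\<^sup>+u. ennreal \<rho> * \<integral>\<^sup>+w. W w u (1 / \<rho>) * h ((x, u), (y, w)) \<partial>Q y \<partial>Q x)"
        by (rule nn_integral_cmult[OF m4, symmetric])
      also have "\<dots> = (\<integral>\<^sup>+u. \<integral>\<^sup>+w. ennreal \<rho> * (W w u (1 / \<rho>) * h ((x, u), (y, w))) \<partial>Q y \<partial>Q x)"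
        by (rule nn_integral_cong, rule nn_integral_cmult[OF m3, symmetric])
      also have "\<dots> = (\<integral>\<^sup>+u. \<integral>\<^sup>+w. W u w \<rho> * h ((x, u), (y, w)) \<partial>Q y \<partial>Q x)"
      proof (rule nn_integral_cong_AE)
        show "AE u in Q x. (\<integral>\<^sup>+w. ennreal \<rho> * (W w u (1 / \<rho>) * h ((x, u), (y, w))) \<partial>Q y) =
                 (\<integral>\<^sup>+w. W u w \<rho> * h ((x, u), (y, w)) \<partial>Q y)"
          using Qnn[OF x]
        proof eventually_elim
          case (elim u)
          show ?case
          proof (rule nn_integral_cong_AE)
            show "AE w in Q y. ennreal \<rho> * (W w u (1 / \<rho>) * h ((x, u), (y, w))) = W u w \<rho> * h ((x, u), (y, w))"
              using Qnn[OF y]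
            proof eventually_elim
              case (elim w)
              then show ?case using Wsym[of w u \<rho>] \<rho>(1) \<open>0 \<le> u\<close> by (simp add: mult.assoc[symmetric])
            qed
          qed
        qed
      qed
      also have "\<dots> = Gf W h z" by (simp add: Gf_def z \<rho>_def)
      finally show "rr z * Gf W ?h (sw z) = Gf W h z" .
    qed
  qed
  also have "\<dots> = Ig W h" by (rule Ig_mu[OF Wm h, symmetric])
  finally show ?thesis .
qed

end

context pmsetup
begin

lemma space_PT_ne: "space PT \<noteq> {}"
  using prob_space.not_empty[OF Pi_prob] .

definition "Gm K \<alpha> = density (PT \<bind> (\<lambda>z. distr (K z) (E \<Otimes>\<^sub>M E) (Pair z))) (\<lambda>p. ennreal (\<alpha> (fst p) (snd p)))"

lemma Gm_kernel:
  assumes K: "K \<in> E \<rightarrow>\<^sub>M subprob_algebra E"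
  shows "(\<lambda>z. distr (K z) (E \<Otimes>\<^sub>M E) (Pair z)) \<in> PT \<rightarrow>\<^sub>M subprob_algebra (E \<Otimes>\<^sub>M E)"
proof -
  have "(\<lambda>z. distr (K z) (E \<Otimes>\<^sub>M E) (Pair z)) \<in> E \<rightarrow>\<^sub>M subprob_algebra (E \<Otimes>\<^sub>M E)"
    by (rule measurable_distr2[OF _ K]) simp
  then show ?thesis by (simp cong: measurable_cong_sets)
qed

lemma sets_Gm[simp, measurable_cong]:
  assumes K: "K \<in> E \<rightarrow>\<^sub>M subprob_algebra E"
  shows "sets (Gm K \<alpha>) = sets (E \<Otimes>\<^sub>M E)"
  unfolding Gm_def using sets_bind_measurable[OF Gm_kernel[OF K] space_PT_ne] by simp

lemma Gm_nn:
  assumes K[measurable]: "K \<in> E \<rightarrow>\<^sub>M subprob_algebra E"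
    and a[measurable]: "(\<lambda>(z, z'). \<alpha> z z') \<in> borel_measurable (E \<Otimes>\<^sub>M E)"
    and h[measurable]: "h \<in> borel_measurable (E \<Otimes>\<^sub>M E)"
  shows "(\<integral>\<^sup>+p. h p \<partial>Gm K \<alpha>) = (\<integral>\<^sup>+z. \<integral>\<^sup>+z'. ennreal (\<alpha> z z') * h (z, z') \<partial>K z \<partial>PT)"
proof -
  have sb: "sets (PT \<bind> (\<lambda>z. distr (K z) (E \<Otimes>\<^sub>M E) (Pair z))) = sets (E \<Otimes>\<^sub>M E)"
    using sets_bind_measurable[OF Gm_kernel[OF K] space_PT_ne] .
  have am: "(\<lambda>p. ennreal (\<alpha> (fst p) (snd p))) \<in> borel_measurable (E \<Otimes>\<^sub>M E)"
    using a by (simp add: case_prod_beta')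
  have "(\<integral>\<^sup>+p. h p \<partial>Gm K \<alpha>) = (\<integral>\<^sup>+p. ennreal (\<alpha> (fst p) (snd p)) * h p \<partial>(PT \<bind> (\<lambda>z. distr (K z) (E \<Otimes>\<^sub>M E) (Pair z))))"
    unfolding Gm_def using am h sb by (subst nn_integral_density) (auto cong: measurable_cong_sets)
  also have "\<dots> = (\<integral>\<^sup>+z. \<integral>\<^sup>+p. ennreal (\<alpha> (fst p) (snd p)) * h p \<partial>distr (K z) (E \<Otimes>\<^sub>M E) (Pair z) \<partial>PT)"
    by (rule nn_integral_bind[OF _ Gm_kernel[OF K]]) (use am h in measurable)
  also have "\<dots> = (\<integral>\<^sup>+z. \<integral>\<^sup>+z'. ennreal (\<alpha> z z') * h (z, z') \<partial>K z \<partial>PT)"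
  proof (rule nn_integral_cong)
    fix z assume z: "z \<in> space PT"
    have Ks: "sets (K z) = sets E" using measurable_space[OF K] z by (simp add: space_subprob_algebra)
    show "(\<integral>\<^sup>+p. ennreal (\<alpha> (fst p) (snd p)) * h p \<partial>distr (K z) (E \<Otimes>\<^sub>M E) (Pair z)) = (\<integral>\<^sup>+z'. ennreal (\<alpha> z z') * h (z, z') \<partial>K z)"
      using z Ks am h by (subst nn_integral_distr) (auto cong: measurable_cong_sets)
  qed
  finally show ?thesis .
qed

definition "Wt = (\<lambda>w u \<rho>. ennreal w * ennreal (min 1 (\<rho> * (u / w))))"
definition "Wb = (\<lambda>w u \<rho>. ennreal w * ennreal u * ennreal (min 1 \<rho>))"

lemma Wt_m: "(\<lambda>p. Wt (fst p) (fst (snd p)) (snd (snd p))) \<in> borel_measurable (borel \<Otimes>\<^sub>M (borel \<Otimes>\<^sub>M borel))"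
  unfolding Wt_def by measurable
lemma Wb_m: "(\<lambda>p. Wb (fst p) (fst (snd p)) (snd (snd p))) \<in> borel_measurable (borel \<Otimes>\<^sub>M (borel \<Otimes>\<^sub>M borel))"
  unfolding Wb_def by measurable

lemma Wt_sym: "0 \<le> w \<Longrightarrow> 0 \<le> u \<Longrightarrow> 0 < \<rho> \<Longrightarrow> ennreal \<rho> * Wt w u (1 / \<rho>) = Wt u w \<rho>"
proof -
  assume w: "0 \<le> w" and u: "0 \<le> u" and p: "0 < \<rho>"
  have "\<rho> * (w * min 1 ((1 / \<rho>) * (u / w))) = u * min 1 (\<rho> * (w / u))"
  proof (cases "w = 0 \<or> u = 0")
    case True then show ?thesis by auto
  next
    case False
    then have w': "0 < w" and u': "0 < u" using w u by auto
    have "\<rho> * (w * min 1 ((1 / \<rho>) * (u / w))) = min (\<rho> * w) u"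
      using w' p by (simp add: min_def field_simps)
    moreover have "u * min 1 (\<rho> * (w / u)) = min (\<rho> * w) u"
      using u' p by (simp add: min_def field_simps)
    ultimately show ?thesis by simp
  qed
  moreover have "0 \<le> min 1 ((1 / \<rho>) * (u / w))" "0 \<le> min 1 (\<rho> * (w / u))" using w u p by auto
  ultimately show ?thesis using w u p
    unfolding Wt_def by (simp add: ennreal_mult[symmetric] mult.assoc)
qed

lemma Wb_sym: "0 \<le> w \<Longrightarrow> 0 \<le> u \<Longrightarrow> 0 < \<rho> \<Longrightarrow> ennreal \<rho> * Wb w u (1 / \<rho>) = Wb u w \<rho>"
proof -
  assume w: "0 \<le> w" and u: "0 \<le> u" and p: "0 < \<rho>"
  have "\<rho> * (w * u * min 1 (1 / \<rho>)) = u * w * min 1 \<rho>"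
    using p by (cases "\<rho> \<le> 1") (auto simp: min_def field_simps)
  then show ?thesis using w u p
    unfolding Wb_def by (simp add: ennreal_mult[symmetric] mult.assoc)
qed

lemma Gt_Ig:
  assumes h[measurable]: "h \<in> borel_measurable (E \<Otimes>\<^sub>M E)"
  shows "(\<integral>\<^sup>+p. h p \<partial>Gm Kt aT) = Ig Wt h"
proof -
  have m1: "(\<lambda>z. \<integral>\<^sup>+z'. ennreal (aT z z') * h (z, z') \<partial>Kt z) \<in> borel_measurable E"
    by (rule nn_integral_kernel_measurable[OF Kt_sub]) measurable
  have "(\<integral>\<^sup>+p. h p \<partial>Gm Kt aT) = (\<integral>\<^sup>+z. \<integral>\<^sup>+z'. ennreal (aT z z') * h (z, z') \<partial>Kt z \<partial>PT)"
    by (rule Gm_nn[OF Kt_sub aT_meas h])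
  also have "\<dots> = (\<integral>\<^sup>+x. \<integral>\<^sup>+w. ennreal w * (\<integral>\<^sup>+z'. ennreal (aT (x, w) z') * h ((x, w), z') \<partial>Kt (x, w)) \<partial>Q x \<partial>\<pi>)"
    by (rule nn_Pi[OF m1])
  also have "\<dots> = Ig Wt h"
    unfolding Ig_def
  proof (intro nn_integral_cong)
    fix x w assume x: "x \<in> space \<pi>"
    have mi: "(\<lambda>z'. ennreal (aT (x, w) z') * h ((x, w), z')) \<in> borel_measurable E"
      using x by measurable
    have "ennreal w * (\<integral>\<^sup>+z'. ennreal (aT (x, w) z') * h ((x, w), z') \<partial>Kt (x, w))
       = ennreal w * (\<integral>\<^sup>+y. \<integral>\<^sup>+u. ennreal (aT (x, w) (y, u)) * h ((x, w), (y, u)) \<partial>Q y \<partial>q x)"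
      by (simp add: nn_Kt[OF x mi])
    also have "\<dots> = (\<integral>\<^sup>+y. ennreal w * \<integral>\<^sup>+u. ennreal (aT (x, w) (y, u)) * h ((x, w), (y, u)) \<partial>Q y \<partial>q x)"
    proof (rule nn_integral_cmult[symmetric])
      have "(\<lambda>y. \<integral>\<^sup>+u. ennreal (aT (x, w) (y, u)) * h ((x, w), (y, u)) \<partial>Q y) \<in> borel_measurable \<pi>"
        by (rule nn_integral_kernel_measurable[OF Qk_sub, where g="\<lambda>y u. ennreal (aT (x, w) (y, u)) * h ((x, w), (y, u))"])
           (use x in measurable)
      then show "(\<lambda>y. \<integral>\<^sup>+u. ennreal (aT (x, w) (y, u)) * h ((x, w), (y, u)) \<partial>Q y) \<in> borel_measurable (q x)"
        using qx[OF x] by (simp cong: measurable_cong_sets)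
    qed
    also have "\<dots> = (\<integral>\<^sup>+y. \<integral>\<^sup>+u. Wt w u (r x y) * h ((x, w), (y, u)) \<partial>Q y \<partial>q x)"
    proof (rule nn_integral_cong)
      fix y assume y: "y \<in> space (q x)"
      then have y': "y \<in> space \<pi>" using x by simp
      have "(\<lambda>u. ennreal (aT (x, w) (y, u)) * h ((x, w), (y, u))) \<in> borel_measurable borel"
        using x y' by measurable
      then have mm: "(\<lambda>u. ennreal (aT (x, w) (y, u)) * h ((x, w), (y, u))) \<in> borel_measurable (Q y)"
        using Qx[OF y'] by (simp cong: measurable_cong_sets)
      show "ennreal w * (\<integral>\<^sup>+u. ennreal (aT (x, w) (y, u)) * h ((x, w), (y, u)) \<partial>Q y) =
            (\<integral>\<^sup>+u. Wt w u (r x y) * h ((x, w), (y, u)) \<partial>Q y)"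
        by (subst nn_integral_cmult[OF mm, symmetric]) (simp add: Wt_def aT_def mult.assoc)
    qed
    finally show "ennreal w * (\<integral>\<^sup>+z'. ennreal (aT (x, w) z') * h ((x, w), z') \<partial>Kt (x, w)) =
        (\<integral>\<^sup>+y. \<integral>\<^sup>+u. Wt w u (r x y) * h ((x, w), (y, u)) \<partial>Q y \<partial>q x)" .
  qed
  finally show ?thesis .
qed

lemma Gb_Ig:
  assumes h[measurable]: "h \<in> borel_measurable (E \<Otimes>\<^sub>M E)"
  shows "(\<integral>\<^sup>+p. h p \<partial>Gm Kb aB) = Ig Wb h"
proof -
  have m1: "(\<lambda>z. \<integral>\<^sup>+z'. ennreal (aB z z') * h (z, z') \<partial>Kb z) \<in> borel_measurable E"
    by (rule nn_integral_kernel_measurable[OF Kb_sub]) measurable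
  have "(\<integral>\<^sup>+p. h p \<partial>Gm Kb aB) = (\<integral>\<^sup>+z. \<integral>\<^sup>+z'. ennreal (aB z z') * h (z, z') \<partial>Kb z \<partial>PT)"
    by (rule Gm_nn[OF Kb_sub ab_meas h])
  also have "\<dots> = (\<integral>\<^sup>+x. \<integral>\<^sup>+w. ennreal w * (\<integral>\<^sup>+z'. ennreal (aB (x, w) z') * h ((x, w), z') \<partial>Kb (x, w)) \<partial>Q x \<partial>\<pi>)"
    by (rule nn_Pi[OF m1])
  also have "\<dots> = Ig Wb h"
    unfolding Ig_def
  proof (intro nn_integral_cong)
    fix x w assume x: "x \<in> space \<pi>"
    have mi: "(\<lambda>z'. ennreal (aB (x, w) z') * h ((x, w), z')) \<in> borel_measurable E"
      using x by measurable
    have "ennreal w * (\<integral>\<^sup>+z'. ennreal (aB (x, w) z') * h ((x, w), z') \<partial>Kb (x, w))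
       = ennreal w * (\<integral>\<^sup>+y. \<integral>\<^sup>+u. ennreal u * (ennreal (aB (x, w) (y, u)) * h ((x, w), (y, u))) \<partial>Q y \<partial>q x)"
      by (simp add: nn_Kb[OF x mi])
    also have "\<dots> = (\<integral>\<^sup>+y. ennreal w * \<integral>\<^sup>+u. ennreal u * (ennreal (aB (x, w) (y, u)) * h ((x, w), (y, u))) \<partial>Q y \<partial>q x)"
    proof (rule nn_integral_cmult[symmetric])
      have "(\<lambda>y. \<integral>\<^sup>+u. ennreal u * (ennreal (aB (x, w) (y, u)) * h ((x, w), (y, u))) \<partial>Q y) \<in> borel_measurable \<pi>"
        by (rule nn_integral_kernel_measurable[OF Qk_sub, where g="\<lambda>y u. ennreal u * (ennreal (aB (x, w) (y, u)) * h ((x, w), (y, u)))"])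
           (use x in measurable)
      then show "(\<lambda>y. \<integral>\<^sup>+u. ennreal u * (ennreal (aB (x, w) (y, u)) * h ((x, w), (y, u))) \<partial>Q y) \<in> borel_measurable (q x)"
        using qx[OF x] by (simp cong: measurable_cong_sets)
    qed
    also have "\<dots> = (\<integral>\<^sup>+y. \<integral>\<^sup>+u. Wb w u (r x y) * h ((x, w), (y, u)) \<partial>Q y \<partial>q x)"
    proof (rule nn_integral_cong)
      fix y assume y: "y \<in> space (q x)"
      then have y': "y \<in> space \<pi>" using x by simp
      have "(\<lambda>u. ennreal u * (ennreal (aB (x, w) (y, u)) * h ((x, w), (y, u)))) \<in> borel_measurable borel"
        using x y' by measurable
      then have mm: "(\<lambda>u. ennreal u * (ennreal (aB (x, w) (y, u)) * h ((x, w), (y, u)))) \<in> borel_measurable (Q y)"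
        using Qx[OF y'] by (simp cong: measurable_cong_sets)
      show "ennreal w * (\<integral>\<^sup>+u. ennreal u * (ennreal (aB (x, w) (y, u)) * h ((x, w), (y, u))) \<partial>Q y) =
            (\<integral>\<^sup>+u. Wb w u (r x y) * h ((x, w), (y, u)) \<partial>Q y)"
        by (subst nn_integral_cmult[OF mm, symmetric]) (simp add: Wb_def aB_def mh_accept_def r_def mult.assoc)
    qed
    finally show "ennreal w * (\<integral>\<^sup>+z'. ennreal (aB (x, w) z') * h ((x, w), z') \<partial>Kb (x, w)) =
        (\<integral>\<^sup>+y. \<integral>\<^sup>+u. Wb w u (r x y) * h ((x, w), (y, u)) \<partial>Q y \<partial>q x)" .
  qed
  finally show ?thesis .
qed

end

context pmsetup
begin

definition "swE = (\<lambda>(z::'a \<times> real, z'::'a \<times> real). (z', z))"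

lemma swE_meas[measurable]: "swE \<in> (E \<Otimes>\<^sub>M E) \<rightarrow>\<^sub>M (E \<Otimes>\<^sub>M E)"
  unfolding swE_def by measurable

lemma Gm_sym_nn:
  assumes "(K, \<alpha>) = (Kt, aT) \<or> (K, \<alpha>) = (Kb, aB)"
    and h[measurable]: "h \<in> borel_measurable (E \<Otimes>\<^sub>M E)"
  shows "(\<integral>\<^sup>+p. h (swE p) \<partial>Gm K \<alpha>) = (\<integral>\<^sup>+p. h p \<partial>Gm K \<alpha>)"
proof -
  have hs: "(\<lambda>p. h (swE p)) = (\<lambda>(z, z'). h (z', z))" by (auto simp: swE_def fun_eq_iff)
  have hsm: "(\<lambda>p. h (swE p)) \<in> borel_measurable (E \<Otimes>\<^sub>M E)" by measurable
  from assms(1) show ?thesis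
  proof
    assume "(K, \<alpha>) = (Kt, aT)"
    then show ?thesis
      using Ig_sym[OF Wt_m Wt_sym h] Gt_Ig[OF h] Gt_Ig[OF hsm] hs by simp
  next
    assume "(K, \<alpha>) = (Kb, aB)"
    then show ?thesis
      using Ig_sym[OF Wb_m Wb_sym h] Gb_Ig[OF h] Gb_Ig[OF hsm] hs by simp
  qed
qed

lemma KaD: "(K, \<alpha>) = (Kt, aT) \<or> (K, \<alpha>) = (Kb, aB) \<Longrightarrow> K \<in> E \<rightarrow>\<^sub>M prob_algebra E \<and> (\<lambda>(z, z'). \<alpha> z z') \<in> borel_measurable (E \<Otimes>\<^sub>M E)"
  using Kt_k Kb_k aT_meas ab_meas by auto

lemma Gm_sym:
  assumes Ka: "(K, \<alpha>) = (Kt, aT) \<or> (K, \<alpha>) = (Kb, aB)"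
  shows "distr (Gm K \<alpha>) (E \<Otimes>\<^sub>M E) swE = Gm K \<alpha>"
proof -
  have K: "K \<in> E \<rightarrow>\<^sub>M subprob_algebra E" using KaD[OF Ka] measurable_prob_algebraD by blast
  show ?thesis
  proof (rule measure_eqI)
    show "sets (distr (Gm K \<alpha>) (E \<Otimes>\<^sub>M E) swE) = sets (Gm K \<alpha>)" using sets_Gm[OF K] by simp
    fix A assume "A \<in> sets (distr (Gm K \<alpha>) (E \<Otimes>\<^sub>M E) swE)"
    then have A[measurable]: "A \<in> sets (E \<Otimes>\<^sub>M E)" by simp
    have "emeasure (distr (Gm K \<alpha>) (E \<Otimes>\<^sub>M E) swE) A = (\<integral>\<^sup>+p. indicator A p \<partial>distr (Gm K \<alpha>) (E \<Otimes>\<^sub>M E) swE)"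
      by simp
    also have "\<dots> = (\<integral>\<^sup>+p. indicator A (swE p) \<partial>Gm K \<alpha>)"
      using sets_Gm[OF K] by (subst nn_integral_distr) (auto cong: measurable_cong_sets)
    also have "\<dots> = (\<integral>\<^sup>+p. indicator A p \<partial>Gm K \<alpha>)"
      by (rule Gm_sym_nn[OF Ka]) simp
    also have "\<dots> = emeasure (Gm K \<alpha>) A" using sets_Gm[OF K] A by simp
    finally show "emeasure (distr (Gm K \<alpha>) (E \<Otimes>\<^sub>M E) swE) A = emeasure (Gm K \<alpha>) A" .
  qed
qed

lemma Gm_sym_int:
  fixes g :: "('a \<times> real) \<times> ('a \<times> real) \<Rightarrow> real"
  assumes Ka: "(K, \<alpha>) = (Kt, aT) \<or> (K, \<alpha>) = (Kb, aB)"
    and g[measurable]: "g \<in> borel_measurable (E \<Otimes>\<^sub>M E)"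
  shows "(\<integral>p. g (swE p) \<partial>Gm K \<alpha>) = (\<integral>p. g p \<partial>Gm K \<alpha>)"
    and "integrable (Gm K \<alpha>) g \<Longrightarrow> integrable (Gm K \<alpha>) (\<lambda>p. g (swE p))"
proof -
  have K: "K \<in> E \<rightarrow>\<^sub>M subprob_algebra E" using KaD[OF Ka] measurable_prob_algebraD by blast
  have sm: "swE \<in> Gm K \<alpha> \<rightarrow>\<^sub>M E \<Otimes>\<^sub>M E" using sets_Gm[OF K] by (simp cong: measurable_cong_sets)
  have "(\<integral>p. g p \<partial>Gm K \<alpha>) = (\<integral>p. g p \<partial>distr (Gm K \<alpha>) (E \<Otimes>\<^sub>M E) swE)" by (simp add: Gm_sym[OF Ka])
  also have "\<dots> = (\<integral>p. g (swE p) \<partial>Gm K \<alpha>)" by (rule integral_distr[OF sm g])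
  finally show "(\<integral>p. g (swE p) \<partial>Gm K \<alpha>) = (\<integral>p. g p \<partial>Gm K \<alpha>)" by simp
  assume "integrable (Gm K \<alpha>) g"
  then have "integrable (distr (Gm K \<alpha>) (E \<Otimes>\<^sub>M E) swE) g" by (simp add: Gm_sym[OF Ka])
  then show "integrable (Gm K \<alpha>) (\<lambda>p. g (swE p))"
    using integrable_distr_eq[OF sm g] by simp
qed

end

context pmsetup
begin

lemma GI_nonneg:
  fixes g :: "('a \<times> real) \<times> ('a \<times> real) \<Rightarrow> real"
  assumes K[measurable]: "K \<in> E \<rightarrow>\<^sub>M subprob_algebra E"
    and a[measurable]: "(\<lambda>(z, z'). \<alpha> z z') \<in> borel_measurable (E \<Otimes>\<^sub>M E)"
    and g[measurable]: "g \<in> borel_measurable (E \<Otimes>\<^sub>M E)" and gnn: "\<And>p. 0 \<le> g p"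
    and gi: "integrable (Gm K \<alpha>) g"
  shows "integrable PT (\<lambda>z. \<integral>z'. max 0 (\<alpha> z z') * g (z, z') \<partial>K z)"
    and "(\<integral>p. g p \<partial>Gm K \<alpha>) = (\<integral>z. (\<integral>z'. max 0 (\<alpha> z z') * g (z, z') \<partial>K z) \<partial>PT)"
    and "AE z in PT. integrable (K z) (\<lambda>z'. max 0 (\<alpha> z z') * g (z, z'))"
proof -
  define F where "F z = (\<integral>\<^sup>+z'. ennreal (\<alpha> z z') * ennreal (g (z, z')) \<partial>K z)" for z
  have Fm: "F \<in> borel_measurable E"
    unfolding F_def by (rule nn_integral_kernel_measurable[OF K]) measurable
  have Fm': "F \<in> borel_measurable PT" using Fm by (simp cong: measurable_cong_sets)
  have nnG: "(\<integral>\<^sup>+p. ennreal (g p) \<partial>Gm K \<alpha>) = (\<integral>\<^sup>+z. F z \<partial>PT)"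
    unfolding F_def by (rule Gm_nn[OF K a]) measurable
  have gm': "g \<in> borel_measurable (Gm K \<alpha>)" using sets_Gm[OF K] by (simp cong: measurable_cong_sets)
  have fin: "(\<integral>\<^sup>+p. ennreal (g p) \<partial>Gm K \<alpha>) < \<infinity>"
    using gi gnn by (simp add: integrable_iff_bounded)
  then have finF: "(\<integral>\<^sup>+z. F z \<partial>PT) \<noteq> \<infinity>" using nnG by simp
  have aeF: "AE z in PT. F z \<noteq> \<infinity>" by (rule nn_integral_PInf_AE[OF Fm' finF])
  define A where "A z = (\<integral>z'. max 0 (\<alpha> z z') * g (z, z') \<partial>K z)" for z
  have Am: "A \<in> borel_measurable E"
    unfolding A_def by (rule integral_kernel_measurable[OF K]) measurable
  have Am': "A \<in> borel_measurable PT" using Am by (simp cong: measurable_cong_sets)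
  have AF: "A z = enn2real (F z)" if z: "z \<in> space E" for z
  proof -
    have Ks: "sets (K z) = sets E" using measurable_space[OF K z] by (simp add: space_subprob_algebra)
    have "(\<lambda>z'. max 0 (\<alpha> z z') * g (z, z')) \<in> borel_measurable (K z)"
      using z Ks by (simp cong: measurable_cong_sets)
    then have "A z = enn2real (\<integral>\<^sup>+z'. ennreal (max 0 (\<alpha> z z') * g (z, z')) \<partial>K z)"
      unfolding A_def by (rule integral_eq_nn_integral) (simp add: gnn)
    also have "(\<integral>\<^sup>+z'. ennreal (max 0 (\<alpha> z z') * g (z, z')) \<partial>K z) = F z"
      unfolding F_def by (rule nn_integral_cong) (simp add: gnn ennreal_mult'' ennreal_max_0)
    finally show ?thesis .
  qed
  show "AE z in PT. integrable (K z) (\<lambda>z'. max 0 (\<alpha> z z') * g (z, z'))"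
    using aeF
  proof (rule AE_mp[OF _ AE_I2[OF impI]])
    fix z assume z: "z \<in> space PT" and Fz: "F z \<noteq> \<infinity>"
    have Ks: "sets (K z) = sets E" using measurable_space[OF K] z by (simp add: space_subprob_algebra)
    have m: "(\<lambda>z'. max 0 (\<alpha> z z') * g (z, z')) \<in> borel_measurable (K z)"
      using z Ks by (simp cong: measurable_cong_sets)
    have "(\<integral>\<^sup>+z'. ennreal (max 0 (\<alpha> z z') * g (z, z')) \<partial>K z) = F z"
      unfolding F_def by (rule nn_integral_cong) (simp add: gnn ennreal_mult'' ennreal_max_0)
    then show "integrable (K z) (\<lambda>z'. max 0 (\<alpha> z z') * g (z, z'))"
      using Fz by (intro integrableI_nonneg[OF m]) (auto simp: gnn top.not_eq_extremum)
  qed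
  have Ann: "\<And>z. 0 \<le> A z" unfolding A_def by (auto intro!: integral_nonneg_AE simp: gnn)
  have nnA: "(\<integral>\<^sup>+z. ennreal (A z) \<partial>PT) = (\<integral>\<^sup>+z. F z \<partial>PT)"
    using aeF by (intro nn_integral_cong_AE) (auto simp: AF ennreal_enn2real_if)
  show "integrable PT (\<lambda>z. \<integral>z'. max 0 (\<alpha> z z') * g (z, z') \<partial>K z)"
    using Am' Ann nnA finF by (intro integrableI_nonneg) (auto simp: A_def[symmetric] top.not_eq_extremum)
  have "(\<integral>p. g p \<partial>Gm K \<alpha>) = enn2real (\<integral>\<^sup>+p. ennreal (g p) \<partial>Gm K \<alpha>)"
    by (rule integral_eq_nn_integral[OF gm']) (simp add: gnn)
  also have "\<dots> = enn2real (\<integral>\<^sup>+z. ennreal (A z) \<partial>PT)" using nnG nnA by simp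
  also have "\<dots> = (\<integral>z. A z \<partial>PT)" by (rule integral_eq_nn_integral[OF Am', symmetric]) (simp add: Ann)
  finally show "(\<integral>p. g p \<partial>Gm K \<alpha>) = (\<integral>z. (\<integral>z'. max 0 (\<alpha> z z') * g (z, z') \<partial>K z) \<partial>PT)"
    by (simp add: A_def)
qed

lemma GI:
  fixes g :: "('a \<times> real) \<times> ('a \<times> real) \<Rightarrow> real"
  assumes K[measurable]: "K \<in> E \<rightarrow>\<^sub>M subprob_algebra E"
    and a[measurable]: "(\<lambda>(z, z'). \<alpha> z z') \<in> borel_measurable (E \<Otimes>\<^sub>M E)"
    and g[measurable]: "g \<in> borel_measurable (E \<Otimes>\<^sub>M E)"
    and gi: "integrable (Gm K \<alpha>) g"
  shows "integrable PT (\<lambda>z. \<integral>z'. max 0 (\<alpha> z z') * g (z, z') \<partial>K z)"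
    and "(\<integral>p. g p \<partial>Gm K \<alpha>) = (\<integral>z. (\<integral>z'. max 0 (\<alpha> z z') * g (z, z') \<partial>K z) \<partial>PT)"
    and "AE z in PT. integrable (K z) (\<lambda>z'. max 0 (\<alpha> z z') * g (z, z'))"
proof -
  let ?p = "\<lambda>p. max 0 (g p)" and ?n = "\<lambda>p. max 0 (- g p)"
  have ip: "integrable (Gm K \<alpha>) ?p" and inn: "integrable (Gm K \<alpha>) ?n" using gi by auto
  have pm: "?p \<in> borel_measurable (E \<Otimes>\<^sub>M E)" and nm: "?n \<in> borel_measurable (E \<Otimes>\<^sub>M E)" by measurable
  have pnn: "\<And>p. 0 \<le> ?p p" and nnn: "\<And>p. 0 \<le> ?n p" by auto
  note P = GI_nonneg[OF K a pm pnn ip] and N = GI_nonneg[OF K a nm nnn inn]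
  define A where "A z = (\<integral>z'. max 0 (\<alpha> z z') * g (z, z') \<partial>K z)" for z
  have Am: "A \<in> borel_measurable E"
    unfolding A_def by (rule integral_kernel_measurable[OF K]) measurable
  have Am': "A \<in> borel_measurable PT" using Am by (simp cong: measurable_cong_sets)
  have ae: "AE z in PT. (\<integral>z'. max 0 (\<alpha> z z') * ?p (z, z') \<partial>K z) - (\<integral>z'. max 0 (\<alpha> z z') * ?n (z, z') \<partial>K z) = A z"
    using P(3) N(3)
  proof eventually_elim
    case (elim z)
    have e: "(\<lambda>z'. max 0 (\<alpha> z z') * g (z, z')) = (\<lambda>z'. max 0 (\<alpha> z z') * ?p (z, z') - max 0 (\<alpha> z z') * ?n (z, z'))"
      by (rule ext) (simp add: max_def algebra_simps)
    show ?case unfolding A_def e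
      by (rule Bochner_Integration.integral_diff[symmetric]) (use elim in auto)
  qed
  have idiff: "integrable PT (\<lambda>z. (\<integral>z'. max 0 (\<alpha> z z') * ?p (z, z') \<partial>K z) - (\<integral>z'. max 0 (\<alpha> z z') * ?n (z, z') \<partial>K z))"
    by (rule Bochner_Integration.integrable_diff[OF P(1) N(1)])
  show iA: "integrable PT (\<lambda>z. \<integral>z'. max 0 (\<alpha> z z') * g (z, z') \<partial>K z)"
    using integrable_cong_AE_imp[OF idiff Am' ae] by (simp add: A_def)
  show "AE z in PT. integrable (K z) (\<lambda>z'. max 0 (\<alpha> z z') * g (z, z'))"
    using P(3) N(3)
  proof eventually_elim
    case (elim z)
    have e: "(\<lambda>z'. max 0 (\<alpha> z z') * g (z, z')) = (\<lambda>z'. max 0 (\<alpha> z z') * ?p (z, z') - max 0 (\<alpha> z z') * ?n (z, z'))"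
      by (rule ext) (simp add: max_def algebra_simps)
    show ?case unfolding e by (rule Bochner_Integration.integrable_diff) (use elim in auto)
  qed
  have "(\<integral>p. g p \<partial>Gm K \<alpha>) = (\<integral>p. ?p p - ?n p \<partial>Gm K \<alpha>)" by (rule arg_cong[where f="integral\<^sup>L (Gm K \<alpha>)"]) (auto simp: max_def fun_eq_iff)
  also have "\<dots> = (\<integral>p. ?p p \<partial>Gm K \<alpha>) - (\<integral>p. ?n p \<partial>Gm K \<alpha>)"
    by (rule Bochner_Integration.integral_diff[OF ip inn])
  also have "\<dots> = (\<integral>z. (\<integral>z'. max 0 (\<alpha> z z') * ?p (z, z') \<partial>K z) \<partial>PT) - (\<integral>z. (\<integral>z'. max 0 (\<alpha> z z') * ?n (z, z') \<partial>K z) \<partial>PT)"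
    using P(2) N(2) by simp
  also have "\<dots> = (\<integral>z. (\<integral>z'. max 0 (\<alpha> z z') * ?p (z, z') \<partial>K z) - (\<integral>z'. max 0 (\<alpha> z z') * ?n (z, z') \<partial>K z) \<partial>PT)"
    by (rule Bochner_Integration.integral_diff[symmetric, OF P(1) N(1)])
  also have "\<dots> = (\<integral>z. A z \<partial>PT)"
    by (rule integral_cong_AE[OF _ Am' ae]) (use idiff in auto)
  finally show "(\<integral>p. g p \<partial>Gm K \<alpha>) = (\<integral>z. (\<integral>z'. max 0 (\<alpha> z z') * g (z, z') \<partial>K z) \<partial>PT)"
    by (simp add: A_def)
qed

end

context pmsetup
begin

lemma Ka_le1: "(K, \<alpha>) = (Kt, aT) \<or> (K, \<alpha>) = (Kb, aB) \<Longrightarrow> \<alpha> z z' \<le> 1"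
  by (auto simp: aT_def aB_def mh_accept_def split: prod.splits)

lemma AE_PT_nonneg: "AE z in PT. 0 \<le> snd z"
proof -
  have S: "{z \<in> space PT. \<not> 0 \<le> snd z} \<in> sets PT" by measurable
  have "emeasure PT {z \<in> space PT. \<not> 0 \<le> snd z} = (\<integral>\<^sup>+z. indicator {z \<in> space E. snd z < 0} z \<partial>PT)"
    by (subst nn_integral_indicator) (use S in \<open>auto simp: not_le\<close>)
  also have "\<dots> = (\<integral>\<^sup>+x. \<integral>\<^sup>+w. ennreal w * indicator {z \<in> space E. snd z < 0} (x, w) \<partial>Q x \<partial>\<pi>)"
    by (rule nn_Pi) measurable
  also have "\<dots> = (\<integral>\<^sup>+x. \<integral>\<^sup>+w. 0 \<partial>Q x \<partial>\<pi>)"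
    by (intro nn_integral_cong) (auto simp: indicator_def ennreal_neg)
  finally show ?thesis by (subst AE_iff_measurable[OF S refl]) simp
qed

lemma AE_Kt_nonneg:
  assumes x: "x \<in> space \<pi>"
  shows "AE z' in Kt (x, w). 0 \<le> snd z'"
proof -
  have N: "(\<lambda>y. distr (Q y) E (\<lambda>u. (y, u))) \<in> q x \<rightarrow>\<^sub>M subprob_algebra E"
    using measurable_prob_algebraD[OF Qdist_k] qx[OF x] by (simp cong: measurable_cong_sets)
  have "AE y in q x. AE z' in distr (Q y) E (\<lambda>u. (y, u)). 0 \<le> snd z'"
  proof (rule AE_I2)
    fix y assume "y \<in> space (q x)"
    then have y: "y \<in> space \<pi>" using x by simp
    show "AE z' in distr (Q y) E (\<lambda>u. (y, u)). 0 \<le> snd z'"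
      using Qnn[OF y] Qx[OF y] y by (subst AE_distr_iff) (auto cong: measurable_cong_sets)
  qed
  moreover have eq: "Kt (x, w) = q x \<bind> (\<lambda>y. distr (Q y) E (\<lambda>u. (y, u)))" by (simp add: Kt_def)
  ultimately show ?thesis unfolding eq by (subst AE_bind[OF N]) simp_all
qed

lemma Ka_AE_nonneg:
  assumes "(K, \<alpha>) = (Kt, aT) \<or> (K, \<alpha>) = (Kb, aB)"
  shows "AE z in PT. AE z' in K z. 0 \<le> \<alpha> z z'"
  using assms
proof
  assume "(K, \<alpha>) = (Kb, aB)"
  then show ?thesis by (auto simp: aB_def mh_accept_def mh_ratio_def split: prod.splits)
next
  assume Ka: "(K, \<alpha>) = (Kt, aT)"
  show ?thesis using AE_PT_nonneg
  proof (rule AE_mp[OF _ AE_I2[OF impI]])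
    fix z assume z: "z \<in> space PT" and w: "0 \<le> snd z"
    obtain x w where zz: "z = (x, w)" by (cases z)
    have x: "x \<in> space \<pi>" using z zz by (simp add: space_pair_measure)
    have KK: "K = Kt" "\<alpha> = aT" using Ka by auto
    show "AE z' in K z. 0 \<le> \<alpha> z z'"
      unfolding KK zz using AE_Kt_nonneg[OF x, of w]
    proof eventually_elim
      case (elim z')
      then show ?case using w zz r_nonneg by (auto simp: aT_def split: prod.splits)
    qed
  qed
qed

lemma Gm_fst_nn:
  assumes Ka: "(K, \<alpha>) = (Kt, aT) \<or> (K, \<alpha>) = (Kb, aB)"
    and h[measurable]: "h \<in> borel_measurable E"
  shows "(\<integral>\<^sup>+p. h (fst p) \<partial>Gm K \<alpha>) \<le> (\<integral>\<^sup>+z. h z \<partial>PT)"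
proof -
  have K: "K \<in> E \<rightarrow>\<^sub>M prob_algebra E" and a: "(\<lambda>(z, z'). \<alpha> z z') \<in> borel_measurable (E \<Otimes>\<^sub>M E)"
    using KaD[OF Ka] by auto
  have "(\<integral>\<^sup>+p. h (fst p) \<partial>Gm K \<alpha>) = (\<integral>\<^sup>+z. \<integral>\<^sup>+z'. ennreal (\<alpha> z z') * h z \<partial>K z \<partial>PT)"
    using Gm_nn[OF measurable_prob_algebraD[OF K] a, of "\<lambda>p. h (fst p)"] by simp
  also have "\<dots> \<le> (\<integral>\<^sup>+z. h z \<partial>PT)"
  proof (rule nn_integral_mono)
    fix z assume z: "z \<in> space PT"
    have Kz: "prob_space (K z)" "sets (K z) = sets E"
      using measurable_space[OF K] z by (auto simp: space_prob_algebra)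
    have am: "(\<lambda>z'. ennreal (\<alpha> z z')) \<in> borel_measurable (K z)"
      using a z Kz(2) by (simp cong: measurable_cong_sets)
    have "(\<integral>\<^sup>+z'. ennreal (\<alpha> z z') * h z \<partial>K z) = (\<integral>\<^sup>+z'. ennreal (\<alpha> z z') \<partial>K z) * h z"
      by (rule nn_integral_multc[OF am])
    also have "\<dots> \<le> 1 * h z"
    proof (rule mult_right_mono)
      have "(\<integral>\<^sup>+z'. ennreal (\<alpha> z z') \<partial>K z) \<le> (\<integral>\<^sup>+z'. 1 \<partial>K z)"
        by (rule nn_integral_mono) (use Ka_le1[OF Ka] in auto)
      also have "\<dots> = 1" using prob_space.emeasure_space_1[OF Kz(1)] by simp
      finally show "(\<integral>\<^sup>+z'. ennreal (\<alpha> z z') \<partial>K z) \<le> 1" .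
    qed simp
    finally show "(\<integral>\<^sup>+z'. ennreal (\<alpha> z z') * h z \<partial>K z) \<le> h z" by simp
  qed
  finally show ?thesis .
qed

lemma Gm_fst_int:
  fixes g :: "'a \<times> real \<Rightarrow> real"
  assumes Ka: "(K, \<alpha>) = (Kt, aT) \<or> (K, \<alpha>) = (Kb, aB)"
    and g: "integrable PT g"
  shows "integrable (Gm K \<alpha>) (\<lambda>p. g (fst p))"
proof -
  have K: "K \<in> E \<rightarrow>\<^sub>M subprob_algebra E" using KaD[OF Ka] measurable_prob_algebraD by blast
  have gm[measurable]: "g \<in> borel_measurable E" using g by (simp cong: measurable_cong_sets)
  have "(\<integral>\<^sup>+p. ennreal (norm (g (fst p))) \<partial>Gm K \<alpha>) \<le> (\<integral>\<^sup>+z. ennreal (norm (g z)) \<partial>PT)"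
    by (rule Gm_fst_nn[OF Ka]) measurable
  also have "\<dots> < \<infinity>" using g by (simp add: integrable_iff_bounded)
  finally show ?thesis
    using sets_Gm[OF K] by (subst integrable_iff_bounded) (simp cong: measurable_cong_sets)
qed

lemma Gm_snd_int:
  fixes g :: "'a \<times> real \<Rightarrow> real"
  assumes Ka: "(K, \<alpha>) = (Kt, aT) \<or> (K, \<alpha>) = (Kb, aB)"
    and g: "integrable PT g"
  shows "integrable (Gm K \<alpha>) (\<lambda>p. g (snd p))"
proof -
  have gm[measurable]: "g \<in> borel_measurable E" using g by (simp cong: measurable_cong_sets)
  have "integrable (Gm K \<alpha>) (\<lambda>p. (\<lambda>p. g (fst p)) (swE p))"
    by (rule Gm_sym_int(2)[OF Ka _ Gm_fst_int[OF Ka g]]) measurable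
  then show ?thesis by (simp add: swE_def case_prod_beta')
qed

end

lemma sq1: "\<bar>(a - b)\<^sup>2\<bar> \<le> \<bar>2 * (a\<^sup>2 + b\<^sup>2)\<bar>" for a b :: real
proof -
  have e: "(a - b)\<^sup>2 + (a + b)\<^sup>2 = 2 * (a\<^sup>2 + b\<^sup>2)" by (simp add: power2_eq_square algebra_simps)
  have "0 \<le> (a + b)\<^sup>2" by simp
  then have "(a - b)\<^sup>2 \<le> 2 * (a\<^sup>2 + b\<^sup>2)" using e by linarith
  then show ?thesis by simp
qed

lemma aux_lin: "x \<le> a1 + p1 \<Longrightarrow> 2 * p1 \<le> a1 + b1 \<Longrightarrow> 0 \<le> a1 \<Longrightarrow> 0 \<le> b1 \<Longrightarrow> x \<le> 2 * (a1 + b1)"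
  for x a1 p1 b1 :: real by (smt (verit))

lemma sq2: "\<bar>(a - b) * a\<bar> \<le> \<bar>2 * (a\<^sup>2 + b\<^sup>2)\<bar>" for a b :: real
proof -
  have e: "(\<bar>a\<bar> - \<bar>b\<bar>)\<^sup>2 = a\<^sup>2 + b\<^sup>2 - 2 * (\<bar>a\<bar> * \<bar>b\<bar>)"
    by (simp add: power2_eq_square algebra_simps)
  have "0 \<le> (\<bar>a\<bar> - \<bar>b\<bar>)\<^sup>2" by simp
  then have h1: "2 * (\<bar>a\<bar> * \<bar>b\<bar>) \<le> a\<^sup>2 + b\<^sup>2" using e by linarith
  have ee: "(a - b) * a = a\<^sup>2 - a * b" by (simp add: power2_eq_square algebra_simps)
  have "\<bar>a\<^sup>2 - a * b\<bar> \<le> \<bar>a\<^sup>2\<bar> + \<bar>a * b\<bar>" by (rule abs_triangle_ineq4)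
  then have "\<bar>(a - b) * a\<bar> \<le> \<bar>a\<^sup>2\<bar> + \<bar>a * b\<bar>" by (simp only: ee)
  then have h2: "\<bar>(a - b) * a\<bar> \<le> a\<^sup>2 + \<bar>a\<bar> * \<bar>b\<bar>" by (simp add: abs_mult)
  have "0 \<le> b\<^sup>2" "0 \<le> a\<^sup>2" by simp_all
  have "\<bar>(a - b) * a\<bar> \<le> 2 * (a\<^sup>2 + b\<^sup>2)" by (rule aux_lin[OF h2 h1]) simp_all
  then show ?thesis by simp
qed

context pmsetup
begin

lemma dirichlet_Gm:
  fixes f :: "'a \<times> real \<Rightarrow> real"
  assumes Ka: "(K, \<alpha>) = (Kt, aT) \<or> (K, \<alpha>) = (Kb, aB)"
    and fm[measurable]: "f \<in> borel_measurable E" and fi: "integrable PT f"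
    and f2: "integrable PT (\<lambda>z. (f z)\<^sup>2)"
  shows "integrable (Gm K \<alpha>) (\<lambda>p. (f (fst p) - f (snd p))\<^sup>2)"
    and "dirichlet PT (mh_kernel E K \<alpha>) f = (\<integral>p. (f (fst p) - f (snd p))\<^sup>2 \<partial>Gm K \<alpha>) / 2"
proof -
  have Kp: "K \<in> E \<rightarrow>\<^sub>M prob_algebra E" and a[measurable]: "(\<lambda>(z, z'). \<alpha> z z') \<in> borel_measurable (E \<Otimes>\<^sub>M E)"
    using KaD[OF Ka] by auto
  have K[measurable]: "K \<in> E \<rightarrow>\<^sub>M subprob_algebra E" using Kp by (rule measurable_prob_algebraD)
  have i1: "integrable (Gm K \<alpha>) (\<lambda>p. (f (fst p))\<^sup>2)" using Gm_fst_int[OF Ka f2] by simp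
  have i2: "integrable (Gm K \<alpha>) (\<lambda>p. (f (snd p))\<^sup>2)" using Gm_snd_int[OF Ka f2] by simp
  have iB: "integrable (Gm K \<alpha>) (\<lambda>p. 2 * ((f (fst p))\<^sup>2 + (f (snd p))\<^sup>2))"
    using i1 i2 by auto
  have mG: "\<And>g. g \<in> borel_measurable (E \<Otimes>\<^sub>M E) \<Longrightarrow> g \<in> borel_measurable (Gm K \<alpha>)"
    using sets_Gm[OF K] by (simp cong: measurable_cong_sets)
  show iD: "integrable (Gm K \<alpha>) (\<lambda>p. (f (fst p) - f (snd p))\<^sup>2)"
    apply (rule Bochner_Integration.integrable_bound[OF iB mG])
     apply measurable
    apply (rule AE_I2)
    apply (simp only: real_norm_def sq1)
    done
  let ?g = "\<lambda>p. (f (fst p) - f (snd p)) * f (fst p)"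
  have ig: "integrable (Gm K \<alpha>) ?g"
    apply (rule Bochner_Integration.integrable_bound[OF iB mG])
     apply measurable
    apply (rule AE_I2)
    apply (simp only: real_norm_def sq2)
    done
  have gsm: "(\<lambda>p. (f (fst p) - f (snd p)) * f (fst p)) \<in> borel_measurable (E \<Otimes>\<^sub>M E)" by measurable
  note G1 = GI[OF K a gsm ig]
  have ifs: "integrable (Gm K \<alpha>) (\<lambda>p. f (snd p))" by (rule Gm_snd_int[OF Ka fi])
  have fsm: "(\<lambda>p. f (snd p)) \<in> borel_measurable (E \<Otimes>\<^sub>M E)" by measurable
  note G2 = GI(3)[OF K a fsm ifs]
  define T where "T = mh_kernel E K \<alpha>"
  have ae: "AE z in PT. (f z - (\<integral>z'. f z' \<partial>T z)) * f z = (\<integral>z'. max 0 (\<alpha> z z') * ((f z - f z') * f z) \<partial>K z)"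
    using G2 Ka_AE_nonneg[OF Ka]
  proof (rule AE_mp[OF _ AE_mp, OF _ _ AE_I2[OF impI[OF impI]]])
    fix z assume z: "z \<in> space PT" and integ: "integrable (K z) (\<lambda>z'. max 0 (\<alpha> z z') * f (snd (z, z')))"
      and nn: "AE z' in K z. 0 \<le> \<alpha> z z'"
    have z': "z \<in> space E" using z by simp
    have Kz: "prob_space (K z)" "sets (K z) = sets E"
      using measurable_space[OF Kp z'] by (auto simp: space_prob_algebra)
    interpret Kz: prob_space "K z" by (rule Kz(1))
    have az: "\<alpha> z \<in> borel_measurable E" using z' by measurable
    have azK: "(\<lambda>z'. \<alpha> z z') \<in> borel_measurable (K z)" using az Kz(2) by (simp cong: measurable_cong_sets)
    have integ': "integrable (K z) (\<lambda>z'. max 0 (\<alpha> z z') * f z')" using integ by simp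
    have fin: "(\<integral>\<^sup>+z'. ennreal (\<alpha> z z') * ennreal \<bar>f z'\<bar> \<partial>K z) < \<infinity>"
    proof -
      have "(\<integral>\<^sup>+z'. ennreal (norm (max 0 (\<alpha> z z') * f z')) \<partial>K z) < \<infinity>"
        using integ' by (simp add: integrable_iff_bounded)
      moreover have "(\<integral>\<^sup>+z'. ennreal (norm (max 0 (\<alpha> z z') * f z')) \<partial>K z) = (\<integral>\<^sup>+z'. ennreal (\<alpha> z z') * ennreal \<bar>f z'\<bar> \<partial>K z)"
        by (rule nn_integral_cong) (simp add: abs_mult ennreal_mult'' ennreal_max_0)
      ultimately show ?thesis by simp
    qed
    have Tf: "(\<integral>z'. f z' \<partial>T z) = (\<integral>z'. max 0 (\<alpha> z z') * f z' \<partial>K z) + f z * max 0 (1 - (\<integral>z'. \<alpha> z z' \<partial>K z))"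
      unfolding T_def by (rule mh_kernel_int(3)[of z E K \<alpha>, OF z' Kz(2) az fm fin])
    have ia: "integrable (K z) (\<lambda>z'. max 0 (\<alpha> z z'))"
      by (rule Bochner_Integration.integrable_bound[OF Kz.integrable_const[of "1::real"]]) (use azK Ka_le1[OF Ka] in \<open>auto intro!: AE_I2\<close>)
    have eqa: "(\<integral>z'. \<alpha> z z' \<partial>K z) = (\<integral>z'. max 0 (\<alpha> z z') \<partial>K z)"
      by (rule integral_cong_AE) (use azK nn in auto)
    have le1: "(\<integral>z'. max 0 (\<alpha> z z') \<partial>K z) \<le> 1"
    proof -
      have "(\<integral>z'. max 0 (\<alpha> z z') \<partial>K z) \<le> (\<integral>z'. 1 \<partial>K z)"
        by (rule integral_mono[OF ia Kz.integrable_const]) (use Ka_le1[OF Ka] in auto)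
      then show ?thesis using Kz.prob_space by simp
    qed
    define A where "A = (\<integral>z'. max 0 (\<alpha> z z') \<partial>K z)"
    define B where "B = (\<integral>z'. max 0 (\<alpha> z z') * f z' \<partial>K z)"
    have "(\<integral>z'. max 0 (\<alpha> z z') * ((f z - f z') * f z) \<partial>K z)
        = (\<integral>z'. (f z * f z) * max 0 (\<alpha> z z') - f z * (max 0 (\<alpha> z z') * f z') \<partial>K z)"
      by (rule arg_cong[where f="integral\<^sup>L (K z)"]) (auto simp: fun_eq_iff algebra_simps)
    also have "\<dots> = (f z * f z) * A - f z * B"
      unfolding A_def B_def
      by (subst Bochner_Integration.integral_diff) (use ia integ' in auto)
    finally have R: "(\<integral>z'. max 0 (\<alpha> z z') * ((f z - f z') * f z) \<partial>K z) = (f z * f z) * A - f z * B" .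
    have M: "max 0 (1 - (\<integral>z'. \<alpha> z z' \<partial>K z)) = 1 - A" using eqa le1 A_def by simp
    have Tf': "(\<integral>z'. f z' \<partial>T z) = B + f z * (1 - A)" by (simp only: Tf M B_def)
    have "(f z - (\<integral>z'. f z' \<partial>T z)) * f z = (f z * f z) * A - f z * B"
      unfolding Tf' by (simp add: algebra_simps)
    then show "(f z - (\<integral>z'. f z' \<partial>T z)) * f z = (\<integral>z'. max 0 (\<alpha> z z') * ((f z - f z') * f z) \<partial>K z)"
      using R by simp
  qed
  have Tm: "(\<lambda>z. \<integral>z'. f z' \<partial>T z) \<in> borel_measurable E"
    unfolding T_def by (rule mh_kernel_Tf_measurable[OF K a fm])
  have m1: "(\<lambda>z. (f z - (\<integral>z'. f z' \<partial>T z)) * f z) \<in> borel_measurable PT"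
    using Tm by (simp cong: measurable_cong_sets)
  have m2: "(\<lambda>z. \<integral>z'. max 0 (\<alpha> z z') * ((f z - f z') * f z) \<partial>K z) \<in> borel_measurable PT"
  proof -
    have "(\<lambda>z. \<integral>z'. max 0 (\<alpha> z z') * ((f z - f z') * f z) \<partial>K z) \<in> borel_measurable E"
      by (rule integral_kernel_measurable[OF K]) measurable
    then show ?thesis by (simp cong: measurable_cong_sets)
  qed
  have "dirichlet PT T f = (\<integral>z. (\<integral>z'. max 0 (\<alpha> z z') * ((f z - f z') * f z) \<partial>K z) \<partial>PT)"
    unfolding dirichlet_def by (rule integral_cong_AE[OF m1 m2 ae])
  also have "\<dots> = (\<integral>p. ?g p \<partial>Gm K \<alpha>)" using G1(2) by simp
  finally have D1: "dirichlet PT T f = (\<integral>p. ?g p \<partial>Gm K \<alpha>)" .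
  have gm: "?g \<in> borel_measurable (E \<Otimes>\<^sub>M E)" by measurable
  have D2: "(\<integral>p. ?g (swE p) \<partial>Gm K \<alpha>) = (\<integral>p. ?g p \<partial>Gm K \<alpha>)" by (rule Gm_sym_int(1)[OF Ka gm])
  have igs: "integrable (Gm K \<alpha>) (\<lambda>p. ?g (swE p))" by (rule Gm_sym_int(2)[OF Ka gm ig])
  have "(\<integral>p. (f (fst p) - f (snd p))\<^sup>2 \<partial>Gm K \<alpha>) = (\<integral>p. ?g p + ?g (swE p) \<partial>Gm K \<alpha>)"
    by (rule arg_cong[where f="integral\<^sup>L (Gm K \<alpha>)"]) (auto simp: fun_eq_iff swE_def power2_eq_square algebra_simps)
  also have "\<dots> = (\<integral>p. ?g p \<partial>Gm K \<alpha>) + (\<integral>p. ?g (swE p) \<partial>Gm K \<alpha>)"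
    by (rule Bochner_Integration.integral_add[OF ig igs])
  finally show "dirichlet PT (mh_kernel E K \<alpha>) f = (\<integral>p. (f (fst p) - f (snd p))\<^sup>2 \<partial>Gm K \<alpha>) / 2"
    using D1 D2 T_def by simp
qed

end

lemma Wb_le_Wt_real:
  fixes w u \<rho> s :: real
  assumes w: "0 < w" and u: "0 < u" and ws: "w < s" and us: "u < s" and p: "0 \<le> \<rho>"
  shows "w * u * min 1 \<rho> \<le> s * (w * min 1 (\<rho> * (u / w)))"
proof -
  have e: "w * min 1 (\<rho> * (u / w)) = min w (\<rho> * u)"
    using w by (simp add: min_def field_simps)
  have wu1: "w * u \<le> s * w" using w us by (simp add: mult.commute mult_strict_left_mono less_imp_le)
  have wu2: "w * u \<le> s * u" using u ws by (simp add: mult_strict_right_mono less_imp_le)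
  have s0: "0 < s" using w ws by simp
  show ?thesis
  proof (cases "1 \<le> \<rho>")
    case True
    then have "min 1 \<rho> = 1" by simp
    moreover have "w * u \<le> s * min w (\<rho> * u)"
    proof (cases "w \<le> \<rho> * u")
      case True then show ?thesis using wu1 by (simp add: min_def)
    next
      case False
      have "u \<le> \<rho> * u" using \<open>1 \<le> \<rho>\<close> u by simp
      then have "s * u \<le> s * (\<rho> * u)" using s0 by simp
      then show ?thesis using False wu2 by (simp add: min_def)
    qed
    ultimately show ?thesis using e by simp
  next
    case False
    then have "min 1 \<rho> = \<rho>" by simp
    moreover have "w * u * \<rho> \<le> s * min w (\<rho> * u)"
    proof (cases "w \<le> \<rho> * u")
      case True
      have "w * u * \<rho> \<le> s * w * \<rho>" using wu1 p by (simp add: mult_right_mono)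
      also have "\<dots> \<le> s * w"
        using False s0 w by (simp add: mult_left_le)
      finally show ?thesis using True by (simp add: min_def)
    next
      case False
      have "w * u * \<rho> \<le> s * u * \<rho>" using wu2 p by (simp add: mult_right_mono)
      then show ?thesis using False by (simp add: min_def algebra_simps)
    qed
    ultimately show ?thesis using e by simp
  qed
qed

context pmsetup
begin

lemma Wb_le_Wt: "0 < s \<Longrightarrow> w < s \<Longrightarrow> u < s \<Longrightarrow> 0 \<le> \<rho> \<Longrightarrow> Wb w u \<rho> \<le> Wt w u \<rho> * ennreal s"
proof -
  assume s: "0 < s" and ws: "w < s" and us: "u < s" and p: "0 \<le> \<rho>"
  show ?thesis
  proof (cases "0 < w \<and> 0 < u")
    case False
    then have "ennreal w = 0 \<or> ennreal u = 0" by (auto simp: ennreal_eq_0_iff)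
    then show ?thesis by (auto simp: Wb_def)
  next
    case True
    have m1: "0 \<le> min 1 \<rho>" "0 \<le> min 1 (\<rho> * (u / w))" using True p by auto
    have "Wb w u \<rho> = ennreal (w * u * min 1 \<rho>)"
      unfolding Wb_def using True m1 by (simp add: ennreal_mult)
    also have "\<dots> \<le> ennreal (s * (w * min 1 (\<rho> * (u / w))))"
      by (rule ennreal_leI, rule Wb_le_Wt_real) (use True ws us p in auto)
    also have "\<dots> = Wt w u \<rho> * ennreal s"
      unfolding Wt_def using True m1 s by (simp add: ennreal_mult mult.commute)
    finally show ?thesis .
  qed
qed

lemma Ig_mono:
  assumes "\<And>x w y u. W w u (r x y) * h ((x, w), (y, u)) \<le> W' w u (r x y) * h' ((x, w), (y, u))"
  shows "Ig W h \<le> Ig W' h'"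
  unfolding Ig_def by (intro nn_integral_mono assms)

definition "Sset (s::real) = {p \<in> space (E \<Otimes>\<^sub>M E). s \<le> snd (fst p) \<or> s \<le> snd (snd p)}"
definition "Sc (s::real) = {p \<in> space (E \<Otimes>\<^sub>M E). snd (fst p) < s \<and> snd (snd p) < s}"

lemma snd2_meas: "(\<lambda>p. snd (snd p)) \<in> borel_measurable (E \<Otimes>\<^sub>M E)"
  by (rule measurable_compose[OF measurable_snd measurable_snd])
lemma snd1_meas: "(\<lambda>p. snd (fst p)) \<in> borel_measurable (E \<Otimes>\<^sub>M E)"
  by (rule measurable_compose[OF measurable_fst measurable_snd])

lemma Sset_meas[measurable]: "Sset s \<in> sets (E \<Otimes>\<^sub>M E)"
proof -
  have "Sset s = ((\<lambda>p. snd (fst p)) -` {s..} \<inter> space (E \<Otimes>\<^sub>M E)) \<union> ((\<lambda>p. snd (snd p)) -` {s..} \<inter> space (E \<Otimes>\<^sub>M E))"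
    by (auto simp: Sset_def)
  also have "\<dots> \<in> sets (E \<Otimes>\<^sub>M E)"
    by (rule sets.Un[OF measurable_sets[OF snd1_meas] measurable_sets[OF snd2_meas]]) (simp_all add: atLeast_borel)
  finally show ?thesis .
qed

lemma Sc_meas[measurable]: "Sc s \<in> sets (E \<Otimes>\<^sub>M E)"
proof -
  have "Sc s = ((\<lambda>p. snd (fst p)) -` {..<s} \<inter> space (E \<Otimes>\<^sub>M E)) \<inter> ((\<lambda>p. snd (snd p)) -` {..<s} \<inter> space (E \<Otimes>\<^sub>M E))"
    by (auto simp: Sc_def)
  also have "\<dots> \<in> sets (E \<Otimes>\<^sub>M E)"
    by (rule sets.Int[OF measurable_sets[OF snd1_meas] measurable_sets[OF snd2_meas]]) (simp_all add: lessThan_borel)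
  finally show ?thesis .
qed

lemma compare:
  assumes s: "0 < s" and D[measurable]: "D \<in> borel_measurable (E \<Otimes>\<^sub>M E)"
  shows "(\<integral>\<^sup>+p. D p \<partial>Gm Kb aB) \<le> ennreal s * (\<integral>\<^sup>+p. D p \<partial>Gm Kt aT) + (\<integral>\<^sup>+p. indicator (Sset s) p * D p \<partial>Gm Kb aB)"
proof -
  have Kb: "Kb \<in> E \<rightarrow>\<^sub>M subprob_algebra E" and Kt: "Kt \<in> E \<rightarrow>\<^sub>M subprob_algebra E" by measurable
  have split: "(\<integral>\<^sup>+p. D p \<partial>Gm Kb aB) = (\<integral>\<^sup>+p. indicator (Sset s) p * D p \<partial>Gm Kb aB) + (\<integral>\<^sup>+p. indicator (Sc s) p * D p \<partial>Gm Kb aB)"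
  proof -
    have "(\<integral>\<^sup>+p. D p \<partial>Gm Kb aB) = (\<integral>\<^sup>+p. indicator (Sset s) p * D p + indicator (Sc s) p * D p \<partial>Gm Kb aB)"
      using sets_eq_imp_space_eq[OF sets_Gm[OF Kb]]
      by (intro nn_integral_cong) (auto simp: indicator_def Sset_def Sc_def)
    also have "\<dots> = (\<integral>\<^sup>+p. indicator (Sset s) p * D p \<partial>Gm Kb aB) + (\<integral>\<^sup>+p. indicator (Sc s) p * D p \<partial>Gm Kb aB)"
    proof (rule nn_integral_add)
      have "(\<lambda>p. indicator (Sc s) p * D p) \<in> borel_measurable (E \<Otimes>\<^sub>M E)" by measurable
      moreover have "(\<lambda>p. indicator (Sset s) p * D p) \<in> borel_measurable (E \<Otimes>\<^sub>M E)" by measurable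
      ultimately show "(\<lambda>p. indicator (Sset s) p * D p) \<in> borel_measurable (Gm Kb aB)"
        "(\<lambda>p. indicator (Sc s) p * D p) \<in> borel_measurable (Gm Kb aB)"
        using sets_Gm[OF Kb] by (simp_all cong: measurable_cong_sets)
    qed
    finally show ?thesis .
  qed
  have mc: "(\<lambda>p. indicator (Sc s) p * D p) \<in> borel_measurable (E \<Otimes>\<^sub>M E)" by measurable
  have "(\<integral>\<^sup>+p. indicator (Sc s) p * D p \<partial>Gm Kb aB) = Ig Wb (\<lambda>p. indicator (Sc s) p * D p)"
    by (rule Gb_Ig[OF mc])
  also have "\<dots> \<le> Ig Wt (\<lambda>p. ennreal s * D p)"
  proof (rule Ig_mono)
    fix x w y u
    show "Wb w u (r x y) * (indicator (Sc s) ((x, w), (y, u)) * D ((x, w), (y, u)))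
        \<le> Wt w u (r x y) * (ennreal s * D ((x, w), (y, u)))"
    proof (cases "w < s \<and> u < s")
      case True
      then have "Wb w u (r x y) \<le> Wt w u (r x y) * ennreal s" using Wb_le_Wt[OF s] r_nonneg by auto
      then have "Wb w u (r x y) * D ((x, w), (y, u)) \<le> Wt w u (r x y) * ennreal s * D ((x, w), (y, u))"
        by (rule mult_right_mono) simp
      then show ?thesis by (simp add: indicator_def Sc_def mult.assoc)
    next
      case False
      then show ?thesis by (auto simp: indicator_def Sc_def not_less)
    qed
  qed
  also have "\<dots> = (\<integral>\<^sup>+p. ennreal s * D p \<partial>Gm Kt aT)"
    by (rule Gt_Ig[symmetric]) measurable
  also have "\<dots> = ennreal s * (\<integral>\<^sup>+p. D p \<partial>Gm Kt aT)"
    by (rule nn_integral_cmult) (use sets_Gm[OF Kt] in \<open>simp cong: measurable_cong_sets\<close>)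
  finally show ?thesis using split by (simp add: add.commute add_mono)
qed

end

lemma holder01:
  fixes F G :: "'b \<Rightarrow> real" and p q :: real
  assumes N: "prob_space N" and p: "1 < p" and pq: "1 / p + 1 / q = 1"
    and Fm: "F \<in> borel_measurable N" and F0: "\<And>x. 0 \<le> F x" and Fi: "integrable N (\<lambda>x. F x powr p)"
    and Gm: "G \<in> borel_measurable N" and G0: "\<And>x. 0 \<le> G x" and G1: "\<And>x. G x \<le> 1"
  shows "(\<integral>\<^sup>+x. ennreal (F x * G x) \<partial>N) \<le> ennreal ((\<integral>x. F x powr p \<partial>N) powr (1 / p) * (\<integral>x. G x \<partial>N) powr (1 / q))"
proof -
  interpret prob_space N by fact
  have q: "1 < q"
  proof -
    have a1: "0 < 1 / p" "1 / p < 1" using p by auto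
    have iq: "1 / q = 1 - 1 / p" using pq by simp
    have b1: "0 < 1 / q" using a1 iq by simp
    have b2: "1 / q < 1" using a1 iq by simp
    have q0: "0 < q" using b1 by (simp add: zero_less_divide_1_iff)
    show ?thesis using b2 q0 by (simp add: field_simps)
  qed
  have Gi: "integrable N G"
    by (rule Bochner_Integration.integrable_bound[OF integrable_const[of "1::real"] Gm]) (use G0 G1 in auto)
  define A where "A = (\<integral>x. F x powr p \<partial>N)"
  define C where "C = (\<integral>x. G x \<partial>N)"
  have A0: "0 \<le> A" unfolding A_def by (rule integral_nonneg_AE) simp
  have C0: "0 \<le> C" unfolding C_def by (rule integral_nonneg_AE) (simp add: G0)
  have FGm: "(\<lambda>x. F x * G x) \<in> borel_measurable N" using Fm Gm by simp
  show ?thesis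
  proof (cases "A = 0 \<or> C = 0")
    case True
    have "AE x in N. F x * G x = 0"
    proof (cases "A = 0")
      case True
      have "AE x in N. F x powr p = 0"
        using integral_nonneg_eq_0_iff_AE[OF Fi] True A_def by simp
      then show ?thesis by eventually_elim simp
    next
      case False
      then have "C = 0" using \<open>A = 0 \<or> C = 0\<close> by simp
      have "AE x in N. G x = 0"
        using integral_nonneg_eq_0_iff_AE[OF Gi] \<open>C = 0\<close> C_def G0 by simp
      then show ?thesis by eventually_elim simp
    qed
    then have "(\<integral>\<^sup>+x. ennreal (F x * G x) \<partial>N) = 0"
      by (subst nn_integral_cong_AE[where v="\<lambda>_. 0"]) (auto elim: eventually_mono)
    then show ?thesis by simp
  next
    case False
    then have Ap: "0 < A" and Cp: "0 < C" using A0 C0 by auto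
    define a where "a = A powr (1 / p)"
    define c where "c = C powr (1 / q)"
    have ap: "0 < a" and cp: "0 < c" using Ap Cp by (auto simp: a_def c_def)
    have apA: "a powr p = A" using Ap p by (simp add: a_def powr_powr)
    have cqC: "c powr q = C" using Cp q by (simp add: c_def powr_powr)
    have pw: "F x * G x \<le> a * c * (F x powr p / (p * A) + G x / (q * C))" for x
    proof -
      have Y: "(F x / a) * (G x / c) \<le> (F x / a) powr p / p + (G x / c) powr q / q"
        by (rule Youngs_inequality) (use p q pq F0 G0 ap cp in auto)
      have e1: "(F x / a) powr p = F x powr p / A" using apA F0[of x] ap by (simp add: powr_divide)
      have e2: "(G x / c) powr q = G x powr q / C" using cqC G0[of x] cp by (simp add: powr_divide)
      have gq: "G x powr q \<le> G x"
      proof (cases "G x = 0")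
        case False then show ?thesis using powr_le_one_le[of "G x" q] G0[of x] G1[of x] q by simp
      qed simp
      have "(G x / c) powr q / q \<le> G x / (q * C)"
        unfolding e2 using gq Cp q by (simp add: divide_right_mono field_simps)
      then have h: "(F x / a) * (G x / c) \<le> F x powr p / (p * A) + G x / (q * C)"
        using Y e1 by (simp add: field_simps)
      have ac: "0 < a * c" using ap cp by simp
      have "(F x / a) * (G x / c) = F x * G x / (a * c)" by simp
      with h have "F x * G x / (a * c) \<le> F x powr p / (p * A) + G x / (q * C)" by simp
      then have "F x * G x \<le> (F x powr p / (p * A) + G x / (q * C)) * (a * c)"
        using pos_divide_le_eq[OF ac] by blast
      then show ?thesis by (simp add: mult.commute)
    qed
    have nn1: "0 \<le> F x powr p / (p * A) + G x / (q * C)" for x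
      using p q Ap Cp G0[of x] by (auto intro!: add_nonneg_nonneg divide_nonneg_pos)
    have "(\<integral>\<^sup>+x. ennreal (F x * G x) \<partial>N) \<le> (\<integral>\<^sup>+x. ennreal (a * c * (F x powr p / (p * A) + G x / (q * C))) \<partial>N)"
      by (rule nn_integral_mono) (rule ennreal_leI[OF pw])
    also have "\<dots> = ennreal (\<integral>x. a * c * (F x powr p / (p * A) + G x / (q * C)) \<partial>N)"
    proof (rule nn_integral_eq_integral)
      show "integrable N (\<lambda>x. a * c * (F x powr p / (p * A) + G x / (q * C)))"
        using Fi Gi by auto
      show "AE x in N. 0 \<le> a * c * (F x powr p / (p * A) + G x / (q * C))"
        using ap cp nn1 by auto
    qed
    also have "(\<integral>x. a * c * (F x powr p / (p * A) + G x / (q * C)) \<partial>N) = a * c * (A / (p * A) + C / (q * C))"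
      using Fi Gi by (simp add: A_def C_def)
    also have "\<dots> = a * c" using Ap Cp pq by (simp add: field_simps)
    finally show ?thesis by (simp add: a_def c_def A_def C_def)
  qed
qed

context pmsetup
begin

definition "I1 (s::real) = (\<lambda>p::('a \<times> real) \<times> ('a \<times> real). if s \<le> snd (fst p) then 1 else (0::ennreal))"
definition "I2 (s::real) = (\<lambda>p::('a \<times> real) \<times> ('a \<times> real). if s \<le> snd (snd p) then 1 else (0::ennreal))"

lemma I1_meas[measurable]: "I1 s \<in> borel_measurable (E \<Otimes>\<^sub>M E)"
  unfolding I1_def using snd1_meas by measurable
lemma I2_meas[measurable]: "I2 s \<in> borel_measurable (E \<Otimes>\<^sub>M E)"
  unfolding I2_def using snd2_meas by measurable

lemma two_two: "2 * (x + x) = 4 * (x::ennreal)"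
  by (simp add: mult_2[symmetric] mult.assoc[symmetric])

lemma T1_sym:
  fixes f :: "'a \<times> real \<Rightarrow> real"
  assumes fm[measurable]: "f \<in> borel_measurable E"
  shows "(\<integral>\<^sup>+p. indicator (Sset s) p * ennreal ((f (fst p) - f (snd p))\<^sup>2) \<partial>Gm Kb aB)
     \<le> 4 * ((\<integral>\<^sup>+p. I1 s p * ennreal ((f (fst p))\<^sup>2) \<partial>Gm Kb aB) + (\<integral>\<^sup>+p. I2 s p * ennreal ((f (fst p))\<^sup>2) \<partial>Gm Kb aB))"
proof -
  have Kab: "(Kb, aB) = (Kt, aT) \<or> (Kb, aB) = (Kb, aB)" by simp
  have Kb: "Kb \<in> E \<rightarrow>\<^sub>M subprob_algebra E" by measurable
  let ?F1 = "\<lambda>p. ennreal ((f (fst p))\<^sup>2)" and ?F2 = "\<lambda>p. ennreal ((f (snd p))\<^sup>2)"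
  let ?g = "\<lambda>p. (I1 s p + I2 s p) * ?F1 p"
  have gm: "?g \<in> borel_measurable (E \<Otimes>\<^sub>M E)" by measurable
  have pw: "indicator (Sset s) p * ennreal ((f (fst p) - f (snd p))\<^sup>2) \<le> 2 * (?g p + ?g (swE p))" for p
  proof -
    have sq: "(f (fst p) - f (snd p))\<^sup>2 \<le> 2 * ((f (fst p))\<^sup>2 + (f (snd p))\<^sup>2)"
      using sq1[of "f (fst p)" "f (snd p)"] by simp
    have E: "?g p + ?g (swE p) = (I1 s p + I2 s p) * (?F1 p + ?F2 p)"
      by (simp add: swE_def I1_def I2_def case_prod_beta' algebra_simps)
    have i: "indicator (Sset s) p \<le> I1 s p + I2 s p"
      by (auto simp: indicator_def Sset_def I1_def I2_def)
    have x: "ennreal ((f (fst p) - f (snd p))\<^sup>2) \<le> 2 * (?F1 p + ?F2 p)"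
    proof -
      have "ennreal ((f (fst p) - f (snd p))\<^sup>2) \<le> ennreal (2 * ((f (fst p))\<^sup>2 + (f (snd p))\<^sup>2))"
        by (rule ennreal_leI[OF sq])
      also have "\<dots> = 2 * (?F1 p + ?F2 p)"
        by (simp add: ennreal_mult ennreal_plus)
      finally show ?thesis .
    qed
    have "indicator (Sset s) p * ennreal ((f (fst p) - f (snd p))\<^sup>2) \<le> (I1 s p + I2 s p) * (2 * (?F1 p + ?F2 p))"
      by (rule mult_mono[OF i x]) simp_all
    also have "\<dots> = 2 * (?g p + ?g (swE p))" unfolding E by (simp add: algebra_simps)
    finally show ?thesis .
  qed
  have "(\<integral>\<^sup>+p. indicator (Sset s) p * ennreal ((f (fst p) - f (snd p))\<^sup>2) \<partial>Gm Kb aB) \<le> (\<integral>\<^sup>+p. 2 * (?g p + ?g (swE p)) \<partial>Gm Kb aB)"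
    by (rule nn_integral_mono) (rule pw)
  also have "\<dots> = 2 * ((\<integral>\<^sup>+p. ?g p \<partial>Gm Kb aB) + (\<integral>\<^sup>+p. ?g (swE p) \<partial>Gm Kb aB))"
    using sets_Gm[OF Kb] by (simp add: nn_integral_cmult nn_integral_add cong: measurable_cong_sets)
  also have "(\<integral>\<^sup>+p. ?g (swE p) \<partial>Gm Kb aB) = (\<integral>\<^sup>+p. ?g p \<partial>Gm Kb aB)"
    by (rule Gm_sym_nn[OF Kab gm])
  also have "(\<integral>\<^sup>+p. ?g p \<partial>Gm Kb aB) = (\<integral>\<^sup>+p. I1 s p * ?F1 p \<partial>Gm Kb aB) + (\<integral>\<^sup>+p. I2 s p * ?F1 p \<partial>Gm Kb aB)"
    using sets_Gm[OF Kb] by (simp add: distrib_right nn_integral_add cong: measurable_cong_sets)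
  finally show ?thesis by (simp only: two_two)
qed

end

context pmsetup
begin

definition "Ind (s::real) = (\<lambda>z::'a \<times> real. if s \<le> snd z then 1 else (0::real))"

lemma Ind_meas[measurable]: "Ind s \<in> borel_measurable E"
  unfolding Ind_def by measurable

definition "Mw s = (\<integral>\<^sup>+z. ennreal (Ind s z) \<partial>PT)"

lemma A_bound:
  fixes f :: "'a \<times> real \<Rightarrow> real"
  assumes fm[measurable]: "f \<in> borel_measurable E"
  shows "(\<integral>\<^sup>+p. I1 s p * ennreal ((f (fst p))\<^sup>2) \<partial>Gm Kb aB) \<le> (\<integral>\<^sup>+z. ennreal ((f z)\<^sup>2 * Ind s z) \<partial>PT)"
proof -
  have Kab: "(Kb, aB) = (Kt, aT) \<or> (Kb, aB) = (Kb, aB)" by simp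
  have "(\<integral>\<^sup>+p. I1 s p * ennreal ((f (fst p))\<^sup>2) \<partial>Gm Kb aB) = (\<integral>\<^sup>+p. ennreal ((f (fst p))\<^sup>2 * Ind s (fst p)) \<partial>Gm Kb aB)"
    by (rule nn_integral_cong) (simp add: I1_def Ind_def)
  also have "\<dots> \<le> (\<integral>\<^sup>+z. ennreal ((f z)\<^sup>2 * Ind s z) \<partial>PT)"
    by (rule Gm_fst_nn[OF Kab]) measurable
  finally show ?thesis .
qed

lemma Ind_sym_bound: "(\<integral>\<^sup>+p. I2 s p \<partial>Gm Kb aB) \<le> Mw s"
proof -
  have Kab: "(Kb, aB) = (Kt, aT) \<or> (Kb, aB) = (Kb, aB)" by simp
  have "(\<integral>\<^sup>+p. I2 s p \<partial>Gm Kb aB) = (\<integral>\<^sup>+p. I1 s (swE p) \<partial>Gm Kb aB)"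
    by (rule nn_integral_cong) (simp add: I1_def I2_def swE_def case_prod_beta')
  also have "\<dots> = (\<integral>\<^sup>+p. I1 s p \<partial>Gm Kb aB)" by (rule Gm_sym_nn[OF Kab]) measurable
  also have "\<dots> = (\<integral>\<^sup>+p. ennreal (Ind s (fst p)) \<partial>Gm Kb aB)"
    by (rule nn_integral_cong) (simp add: I1_def Ind_def)
  also have "\<dots> \<le> Mw s" unfolding Mw_def by (rule Gm_fst_nn[OF Kab]) measurable
  finally show ?thesis .
qed

lemma B_bound:
  fixes f :: "'a \<times> real \<Rightarrow> real"
  assumes fm[measurable]: "f \<in> borel_measurable E"
  obtains g where "g \<in> borel_measurable PT" "\<And>z. 0 \<le> g z" "\<And>z. g z \<le> 1"
    "(\<integral>\<^sup>+p. I2 s p * ennreal ((f (fst p))\<^sup>2) \<partial>Gm Kb aB) = (\<integral>\<^sup>+z. ennreal ((f z)\<^sup>2 * g z) \<partial>PT)"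
    "(\<integral>\<^sup>+z. ennreal (g z) \<partial>PT) \<le> Mw s"
proof -
  have Kb: "Kb \<in> E \<rightarrow>\<^sub>M subprob_algebra E" by measurable
  define G where "G z = (\<integral>\<^sup>+z'. ennreal (aB z z') * I2 s (z, z') \<partial>Kb z)" for z
  have Gm: "G \<in> borel_measurable E"
    unfolding G_def by (rule nn_integral_kernel_measurable[OF Kb]) measurable
  have G1: "G z \<le> 1" if z: "z \<in> space E" for z
  proof -
    have Kz: "prob_space (Kb z)" using Kb_z[OF z] by blast
    have "G z \<le> (\<integral>\<^sup>+z'. 1 \<partial>Kb z)" unfolding G_def
      by (rule nn_integral_mono) (auto simp: I2_def aB_def mh_accept_def split: prod.splits)
    also have "\<dots> = 1" using prob_space.emeasure_space_1[OF Kz] by simp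
    finally show ?thesis .
  qed
  define g where "g z = (if z \<in> space E then enn2real (G z) else 0)" for z
  have gG: "ennreal (g z) = G z" if "z \<in> space E" for z
    using G1[OF that] that by (simp add: g_def ennreal_enn2real_if top_unique) (metis ennreal_one_neq_top top.extremum_unique)
  have g0: "\<And>z. 0 \<le> g z" by (simp add: g_def)
  have g1: "\<And>z. g z \<le> 1"
  proof -
    fix z show "g z \<le> 1"
    proof (cases "z \<in> space E")
      case True
      then have "ennreal (g z) \<le> 1" using gG G1 by simp
      then show ?thesis by (simp add: ennreal_le_1)
    qed (simp add: g_def)
  qed
  have gm: "g \<in> borel_measurable E"
  proof -
    have "(\<lambda>z. enn2real (G z)) \<in> borel_measurable E" using Gm by measurable
    then show ?thesis by (rule measurable_cong[THEN iffD1, rotated]) (simp add: g_def)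
  qed
  have eq1: "(\<integral>\<^sup>+p. I2 s p * ennreal ((f (fst p))\<^sup>2) \<partial>Gm Kb aB) = (\<integral>\<^sup>+z. ennreal ((f z)\<^sup>2 * g z) \<partial>PT)"
  proof -
    have "(\<integral>\<^sup>+p. I2 s p * ennreal ((f (fst p))\<^sup>2) \<partial>Gm Kb aB) =
        (\<integral>\<^sup>+z. \<integral>\<^sup>+z'. ennreal (aB z z') * (I2 s (z, z') * ennreal ((f z)\<^sup>2)) \<partial>Kb z \<partial>PT)"
      using Gm_nn[OF Kb ab_meas, of "\<lambda>p. I2 s p * ennreal ((f (fst p))\<^sup>2)"] by simp
    also have "\<dots> = (\<integral>\<^sup>+z. ennreal ((f z)\<^sup>2 * g z) \<partial>PT)"
    proof (rule nn_integral_cong)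
      fix z assume z: "z \<in> space PT"
      then have z': "z \<in> space E" by simp
      have Ks: "sets (Kb z) = sets E" using Kb_z[OF z'] by blast
      have mm: "(\<lambda>z'. ennreal (aB z z') * I2 s (z, z')) \<in> borel_measurable (Kb z)"
        using z' Ks by (simp cong: measurable_cong_sets)
      have "(\<integral>\<^sup>+z'. ennreal (aB z z') * (I2 s (z, z') * ennreal ((f z)\<^sup>2)) \<partial>Kb z)
          = (\<integral>\<^sup>+z'. ennreal (aB z z') * I2 s (z, z') * ennreal ((f z)\<^sup>2) \<partial>Kb z)"
        by (simp add: mult.assoc)
      also have "\<dots> = G z * ennreal ((f z)\<^sup>2)" unfolding G_def by (rule nn_integral_multc[OF mm])
      also have "\<dots> = ennreal ((f z)\<^sup>2 * g z)" using gG[OF z'] g0 by (simp add: ennreal_mult mult.commute)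
      finally show "(\<integral>\<^sup>+z'. ennreal (aB z z') * (I2 s (z, z') * ennreal ((f z)\<^sup>2)) \<partial>Kb z) = ennreal ((f z)\<^sup>2 * g z)" .
    qed
    finally show ?thesis .
  qed
  have eq2: "(\<integral>\<^sup>+z. ennreal (g z) \<partial>PT) = (\<integral>\<^sup>+p. I2 s p \<partial>Gm Kb aB)"
  proof -
    have "(\<integral>\<^sup>+p. I2 s p \<partial>Gm Kb aB) = (\<integral>\<^sup>+z. \<integral>\<^sup>+z'. ennreal (aB z z') * I2 s (z, z') \<partial>Kb z \<partial>PT)"
      using Gm_nn[OF Kb ab_meas, of "I2 s"] by simp
    also have "\<dots> = (\<integral>\<^sup>+z. ennreal (g z) \<partial>PT)"
      by (rule nn_integral_cong) (simp add: gG G_def)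
    finally show ?thesis by simp
  qed
  show ?thesis
  proof (rule that[of g])
    show "g \<in> borel_measurable PT" using gm by (simp cong: measurable_cong_sets)
  qed (use g0 g1 eq1 eq2 Ind_sym_bound in auto)
qed

lemma Mw_eq: "(\<integral>x. measure (pitilde_x Q x) {s..} \<partial>\<pi>) = enn2real (Mw s)"
proof -
  have m: "(\<lambda>x. measure (pitilde_x Q x) {s..}) \<in> borel_measurable \<pi>"
    by (rule measure_measurable_subprob_algebra2[OF _ pitilde_x_sub]) measurable
  have e: "ennreal (measure (pitilde_x Q x) {s..}) = (\<integral>\<^sup>+w. ennreal w * ennreal (Ind s (x, w)) \<partial>Q x)"
    if x: "x \<in> space \<pi>" for x
  proof -
    interpret prob_space "pitilde_x Q x" using pitilde_x_prob[OF x] by blast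
    have "ennreal (measure (pitilde_x Q x) {s..}) = emeasure (pitilde_x Q x) {s..}"
      by (simp add: emeasure_eq_measure)
    also have "\<dots> = (\<integral>\<^sup>+w. ennreal w * indicator {s..} w \<partial>Q x)"
      using x by (simp add: emeasure_pitilde_x)
    also have "\<dots> = (\<integral>\<^sup>+w. ennreal w * ennreal (Ind s (x, w)) \<partial>Q x)"
      by (rule nn_integral_cong) (simp add: Ind_def indicator_def)
    finally show ?thesis .
  qed
  have "(\<integral>x. measure (pitilde_x Q x) {s..} \<partial>\<pi>) = enn2real (\<integral>\<^sup>+x. ennreal (measure (pitilde_x Q x) {s..}) \<partial>\<pi>)"
    by (rule integral_eq_nn_integral[OF m]) simp
  also have "(\<integral>\<^sup>+x. ennreal (measure (pitilde_x Q x) {s..}) \<partial>\<pi>) = (\<integral>\<^sup>+x. \<integral>\<^sup>+w. ennreal w * ennreal (Ind s (x, w)) \<partial>Q x \<partial>\<pi>)"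
    by (rule nn_integral_cong) (simp add: e)
  also have "\<dots> = Mw s" unfolding Mw_def by (rule nn_Pi[symmetric]) measurable
  finally show ?thesis .
qed

lemma Mw_le1: "Mw s \<le> 1"
proof -
  have "Mw s \<le> (\<integral>\<^sup>+z. 1 \<partial>PT)" unfolding Mw_def by (rule nn_integral_mono) (simp add: Ind_def)
  also have "\<dots> = 1" using prob_space.emeasure_space_1[OF Pi_prob] by simp
  finally show ?thesis .
qed

end

context pmsetup
begin

lemma AE_lift:
  assumes Ka: "(K, \<alpha>) = (Kt, aT) \<or> (K, \<alpha>) = (Kb, aB)"
    and P[measurable]: "Measurable.pred E P" and ae: "AE z in PT. P z"
  shows "AE p in Gm K \<alpha>. P (fst p) \<and> P (snd p)"
proof -
  have K: "K \<in> E \<rightarrow>\<^sub>M subprob_algebra E" using KaD[OF Ka] measurable_prob_algebraD by blast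
  let ?h = "\<lambda>z. indicator {z \<in> space E. \<not> P z} z :: ennreal"
  have hm: "?h \<in> borel_measurable E" by measurable
  have z0: "(\<integral>\<^sup>+z. ?h z \<partial>PT) = 0"
  proof -
    have "AE z in PT. ?h z = 0" using ae by eventually_elim simp
    then show ?thesis by (subst nn_integral_cong_AE[where v="\<lambda>_. 0"]) simp_all
  qed
  have f0: "(\<integral>\<^sup>+p. ?h (fst p) \<partial>Gm K \<alpha>) = 0"
    using Gm_fst_nn[OF Ka hm] z0 by simp
  have s0: "(\<integral>\<^sup>+p. ?h (snd p) \<partial>Gm K \<alpha>) = 0"
  proof -
    have "(\<integral>\<^sup>+p. ?h (snd p) \<partial>Gm K \<alpha>) = (\<integral>\<^sup>+p. (\<lambda>p. ?h (fst p)) (swE p) \<partial>Gm K \<alpha>)"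
      by (simp add: swE_def case_prod_beta')
    also have "\<dots> = (\<integral>\<^sup>+p. ?h (fst p) \<partial>Gm K \<alpha>)" by (rule Gm_sym_nn[OF Ka]) measurable
    finally show ?thesis using f0 by simp
  qed
  have m1: "(\<lambda>p. ?h (fst p)) \<in> borel_measurable (Gm K \<alpha>)" "(\<lambda>p. ?h (snd p)) \<in> borel_measurable (Gm K \<alpha>)"
    using sets_Gm[OF K] by (simp_all cong: measurable_cong_sets)
  have a1: "AE p in Gm K \<alpha>. ?h (fst p) = 0" using f0 nn_integral_0_iff_AE[OF m1(1)] by simp
  have a2: "AE p in Gm K \<alpha>. ?h (snd p) = 0" using s0 nn_integral_0_iff_AE[OF m1(2)] by simp
  have sp: "space (Gm K \<alpha>) = space (E \<Otimes>\<^sub>M E)" using sets_Gm[OF K] by (rule sets_eq_imp_space_eq)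
  show ?thesis using a1 a2
    by (rule AE_mp[OF _ AE_mp[OF _ AE_I2]]) (auto simp: sp space_pair_measure indicator_def split: if_splits)
qed


lemma main_common:
  fixes f :: "'a \<times> real \<Rightarrow> real" and s R :: real
  assumes fm[measurable]: "f \<in> borel_measurable E" and fi: "integrable PT f"
    and f2: "integrable PT (\<lambda>z. (f z)\<^sup>2)" and s: "0 < s" and R: "0 \<le> R"
    and T1: "(\<integral>\<^sup>+p. indicator (Sset s) p * ennreal ((f (fst p) - f (snd p))\<^sup>2) \<partial>Gm Kb aB) \<le> ennreal (2 * R)"
  shows "dirichlet PT (Pbar \<pi> q Q) f \<le> s * dirichlet PT (Ptilde \<pi> q Q) f + R"
proof -
  have Kat: "(Kt, aT) = (Kt, aT) \<or> (Kt, aT) = (Kb, aB)" and Kab: "(Kb, aB) = (Kt, aT) \<or> (Kb, aB) = (Kb, aB)" by simp_all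
  let ?D = "\<lambda>p. (f (fst p) - f (snd p))\<^sup>2"
  note dt = dirichlet_Gm[OF Kat fm fi f2] and db = dirichlet_Gm[OF Kab fm fi f2]
  have nt: "(\<integral>\<^sup>+p. ennreal (?D p) \<partial>Gm Kt aT) = ennreal (\<integral>p. ?D p \<partial>Gm Kt aT)"
    by (rule nn_integral_eq_integral[OF dt(1)]) simp
  have nb: "(\<integral>\<^sup>+p. ennreal (?D p) \<partial>Gm Kb aB) = ennreal (\<integral>p. ?D p \<partial>Gm Kb aB)"
    by (rule nn_integral_eq_integral[OF db(1)]) simp
  have Dt0: "0 \<le> (\<integral>p. ?D p \<partial>Gm Kt aT)" by (rule integral_nonneg_AE) simp
  have "ennreal (\<integral>p. ?D p \<partial>Gm Kb aB) \<le> ennreal s * ennreal (\<integral>p. ?D p \<partial>Gm Kt aT) + ennreal (2 * R)"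
  proof -
    have Dm: "(\<lambda>p. ennreal (?D p)) \<in> borel_measurable (E \<Otimes>\<^sub>M E)" by measurable
    have c: "(\<integral>\<^sup>+p. ennreal (?D p) \<partial>Gm Kb aB) \<le> ennreal s * (\<integral>\<^sup>+p. ennreal (?D p) \<partial>Gm Kt aT)
        + (\<integral>\<^sup>+p. indicator (Sset s) p * ennreal (?D p) \<partial>Gm Kb aB)"
      by (rule compare[OF s Dm])
    from order_trans[OF c add_left_mono[OF T1]] show ?thesis unfolding nt nb .
  qed
  also have "\<dots> = ennreal (s * (\<integral>p. ?D p \<partial>Gm Kt aT) + 2 * R)"
    using s Dt0 R by (simp add: ennreal_mult ennreal_plus)
  finally have "(\<integral>p. ?D p \<partial>Gm Kb aB) \<le> s * (\<integral>p. ?D p \<partial>Gm Kt aT) + 2 * R"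
    using s Dt0 R by (subst (asm) ennreal_le_iff) auto
  then show ?thesis
    unfolding Ptilde_eq Pbar_eq dt(2) db(2) by (simp add: field_simps)
qed

end

context pmsetup
begin

lemma Mw_fin: "Mw s = ennreal (enn2real (Mw s))"
  using Mw_le1[of s] by (cases "Mw s") (auto simp: top_unique)

lemma I1_bound: "(\<integral>\<^sup>+p. I1 s p \<partial>Gm Kb aB) \<le> Mw s"
proof -
  have Kab: "(Kb, aB) = (Kt, aT) \<or> (Kb, aB) = (Kb, aB)" by simp
  have "(\<integral>\<^sup>+p. I1 s p \<partial>Gm Kb aB) = (\<integral>\<^sup>+p. ennreal (Ind s (fst p)) \<partial>Gm Kb aB)"
    by (rule nn_integral_cong) (simp add: I1_def Ind_def)
  also have "\<dots> \<le> Mw s" unfolding Mw_def by (rule Gm_fst_nn[OF Kab]) measurable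
  finally show ?thesis .
qed

lemma T1_inf:
  fixes f :: "'a \<times> real \<Rightarrow> real" and a b :: real
  assumes fm[measurable]: "f \<in> borel_measurable E"
    and ae: "AE z in PT. f z \<le> a \<and> - f z \<le> b"
  shows "(\<integral>\<^sup>+p. indicator (Sset s) p * ennreal ((f (fst p) - f (snd p))\<^sup>2) \<partial>Gm Kb aB)
      \<le> ennreal (2 * ((a + b)\<^sup>2 * enn2real (Mw s)))"
proof -
  have Kab: "(Kb, aB) = (Kt, aT) \<or> (Kb, aB) = (Kb, aB)" by simp
  have Kb: "Kb \<in> E \<rightarrow>\<^sub>M subprob_algebra E" by measurable
  have P: "Measurable.pred E (\<lambda>z. f z \<le> a \<and> - f z \<le> b)" by measurable
  have ae2: "AE p in Gm Kb aB. (f (fst p) - f (snd p))\<^sup>2 \<le> (a + b)\<^sup>2"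
    using AE_lift[OF Kab P ae]
  proof eventually_elim
    case (elim p)
    then have "\<bar>f (fst p) - f (snd p)\<bar> \<le> a + b" by auto
    then have "\<bar>f (fst p) - f (snd p)\<bar>\<^sup>2 \<le> (a + b)\<^sup>2"
      by (rule power_mono) simp
    then show ?case by simp
  qed
  let ?c = "ennreal ((a + b)\<^sup>2)"
  have "(\<integral>\<^sup>+p. indicator (Sset s) p * ennreal ((f (fst p) - f (snd p))\<^sup>2) \<partial>Gm Kb aB)
      \<le> (\<integral>\<^sup>+p. (I1 s p + I2 s p) * ?c \<partial>Gm Kb aB)"
  proof (rule nn_integral_mono_AE)
    show "AE p in Gm Kb aB. indicator (Sset s) p * ennreal ((f (fst p) - f (snd p))\<^sup>2) \<le> (I1 s p + I2 s p) * ?c"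
      using ae2
    proof eventually_elim
      case (elim p)
      have "indicator (Sset s) p \<le> I1 s p + I2 s p"
        by (auto simp: indicator_def Sset_def I1_def I2_def)
      moreover have "ennreal ((f (fst p) - f (snd p))\<^sup>2) \<le> ?c" using elim by (rule ennreal_leI)
      ultimately show ?case by (rule mult_mono) simp_all
    qed
  qed
  also have "\<dots> = ((\<integral>\<^sup>+p. I1 s p \<partial>Gm Kb aB) + (\<integral>\<^sup>+p. I2 s p \<partial>Gm Kb aB)) * ?c"
    using sets_Gm[OF Kb] by (simp add: nn_integral_multc nn_integral_add cong: measurable_cong_sets)
  also have "\<dots> \<le> (Mw s + Mw s) * ?c"
    by (intro mult_right_mono add_mono I1_bound Ind_sym_bound) simp
  also have "\<dots> = ennreal (2 * ((a + b)\<^sup>2 * enn2real (Mw s)))"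
    by (subst (1 2) Mw_fin) (simp add: ennreal_mult[symmetric] ennreal_plus[symmetric] del: ennreal_plus)
  finally show ?thesis .
qed

lemma four_sum: "0 \<le> y \<Longrightarrow> 4 * (ennreal y + ennreal y) = ennreal (2 * (4 * y))"
proof -
  assume y: "0 \<le> y"
  have "ennreal y + ennreal y = ennreal (y + y)" using y by (rule ennreal_plus[symmetric]; simp)
  moreover have "(4::ennreal) = ennreal 4" by simp
  moreover have "ennreal 4 * ennreal (y + y) = ennreal (4 * (y + y))" using y by (intro ennreal_mult[symmetric]) auto
  ultimately show ?thesis by (simp add: algebra_simps)
qed

lemma sq_powr: "((x::real)\<^sup>2) powr p = \<bar>x\<bar> powr (2 * p)"
proof -
  have e: "(x\<^sup>2) = \<bar>x\<bar> powr 2" by (cases "x = 0") (simp_all add: power2_abs)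
  have "(x\<^sup>2) powr p = (\<bar>x\<bar> powr 2) powr p" by (simp only: e)
  also have "\<dots> = \<bar>x\<bar> powr (2 * p)" by (rule powr_powr)
  finally show ?thesis .
qed

lemma T1_fin:
  fixes f :: "'a \<times> real \<Rightarrow> real" and p qq :: real
  assumes fm[measurable]: "f \<in> borel_measurable E"
    and p: "1 < p" and pq: "1 / p + 1 / qq = 1"
    and fp: "integrable PT (\<lambda>z. \<bar>f z\<bar> powr (2 * p))"
  shows "(\<integral>\<^sup>+p. indicator (Sset s) p * ennreal ((f (fst p) - f (snd p))\<^sup>2) \<partial>Gm Kb aB)
      \<le> ennreal (2 * ((4 * (lpnorm PT (2 * p) f)\<^sup>2) * (enn2real (Mw s)) powr (1 / qq)))"
proof -
  have PTp: "prob_space PT" by (rule Pi_prob)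
  have fmP: "f \<in> borel_measurable PT" by (simp cong: measurable_cong_sets)
  let ?F = "\<lambda>z. (f z)\<^sup>2"
  have Fm: "?F \<in> borel_measurable PT" using fmP by simp
  have Fi: "integrable PT (\<lambda>z. ?F z powr p)" using fp by (simp add: sq_powr)
  define N where "N = (\<integral>z. ?F z powr p \<partial>PT) powr (1 / p)"
  define Mr where "Mr = enn2real (Mw s)"
  have Mr0: "0 \<le> Mr" by (simp add: Mr_def)
  have N0: "0 \<le> N" by (simp add: N_def)
  have A: "(\<integral>\<^sup>+p. I1 s p * ennreal ((f (fst p))\<^sup>2) \<partial>Gm Kb aB) \<le> ennreal (N * Mr powr (1 / qq))"
  proof -
    have IndP: "Ind s \<in> borel_measurable PT" by (simp cong: measurable_cong_sets)
    have iI: "(\<integral>z. Ind s z \<partial>PT) = Mr"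
      unfolding Mr_def Mw_def by (rule integral_eq_nn_integral[OF IndP]) (simp add: Ind_def)
    have "(\<integral>\<^sup>+p. I1 s p * ennreal ((f (fst p))\<^sup>2) \<partial>Gm Kb aB) \<le> (\<integral>\<^sup>+z. ennreal (?F z * Ind s z) \<partial>PT)"
      by (rule A_bound[OF fm])
    also have "\<dots> \<le> ennreal ((\<integral>z. ?F z powr p \<partial>PT) powr (1 / p) * (\<integral>z. Ind s z \<partial>PT) powr (1 / qq))"
      by (rule holder01[OF PTp p pq Fm _ Fi IndP]) (auto simp: Ind_def)
    finally show ?thesis by (simp add: iI N_def)
  qed
  have B: "(\<integral>\<^sup>+p. I2 s p * ennreal ((f (fst p))\<^sup>2) \<partial>Gm Kb aB) \<le> ennreal (N * Mr powr (1 / qq))"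
  proof -
    obtain g where gm: "g \<in> borel_measurable PT" and g0: "\<And>z. 0 \<le> g z" and g1: "\<And>z. g z \<le> 1"
      and eq: "(\<integral>\<^sup>+p. I2 s p * ennreal ((f (fst p))\<^sup>2) \<partial>Gm Kb aB) = (\<integral>\<^sup>+z. ennreal ((f z)\<^sup>2 * g z) \<partial>PT)"
      and gM: "(\<integral>\<^sup>+z. ennreal (g z) \<partial>PT) \<le> Mw s"
      using B_bound[OF fm] by blast
    have ig: "(\<integral>z. g z \<partial>PT) \<le> Mr"
    proof -
      have "(\<integral>z. g z \<partial>PT) = enn2real (\<integral>\<^sup>+z. ennreal (g z) \<partial>PT)"
        by (rule integral_eq_nn_integral[OF gm]) (simp add: g0)
      also have "\<dots> \<le> enn2real (Mw s)"
        by (rule enn2real_mono[OF gM]) (use Mw_le1[of s] in \<open>metis ennreal_one_less_top le_less_trans\<close>)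
      finally show ?thesis by (simp add: Mr_def)
    qed
    have ig0: "0 \<le> (\<integral>z. g z \<partial>PT)" by (rule integral_nonneg_AE) (simp add: g0)
    have q0: "0 < qq"
    proof -
      have "1 / qq = 1 - 1 / p" using pq by simp
      moreover have "1 / p < 1" using p by simp
      ultimately have "0 < 1 / qq" by simp
      then show ?thesis by (simp add: zero_less_divide_1_iff)
    qed
    have "(\<integral>\<^sup>+z. ennreal ((f z)\<^sup>2 * g z) \<partial>PT) \<le> ennreal ((\<integral>z. ?F z powr p \<partial>PT) powr (1 / p) * (\<integral>z. g z \<partial>PT) powr (1 / qq))"
      by (rule holder01[OF PTp p pq Fm _ Fi gm g0 g1]) simp
    also have "\<dots> \<le> ennreal (N * Mr powr (1 / qq))"
      unfolding N_def[symmetric]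
      by (intro ennreal_leI mult_left_mono powr_mono2 ig ig0 N0) (use q0 in simp)
    finally show ?thesis using eq by simp
  qed
  have lp: "(lpnorm PT (2 * p) f)\<^sup>2 = N"
  proof -
    have "(lpnorm PT (2 * p) f)\<^sup>2 = ((\<integral>z. \<bar>f z\<bar> powr (2 * p) \<partial>PT) powr (1 / (2 * p))) powr 2"
      unfolding lpnorm_def by (subst powr_numeral) simp_all
    also have "\<dots> = (\<integral>z. \<bar>f z\<bar> powr (2 * p) \<partial>PT) powr (1 / p)"
      using p by (simp add: powr_powr)
    also have "\<dots> = N" by (simp add: N_def sq_powr)
    finally show ?thesis .
  qed
  have "(\<integral>\<^sup>+p. indicator (Sset s) p * ennreal ((f (fst p) - f (snd p))\<^sup>2) \<partial>Gm Kb aB)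
      \<le> 4 * ((\<integral>\<^sup>+p. I1 s p * ennreal ((f (fst p))\<^sup>2) \<partial>Gm Kb aB) + (\<integral>\<^sup>+p. I2 s p * ennreal ((f (fst p))\<^sup>2) \<partial>Gm Kb aB))"
    by (rule T1_sym[OF fm])
  also have "\<dots> \<le> 4 * (ennreal (N * Mr powr (1 / qq)) + ennreal (N * Mr powr (1 / qq)))"
    by (intro mult_left_mono add_mono A B) simp
  also have "\<dots> = ennreal (2 * (4 * (N * Mr powr (1 / qq))))"
    by (rule four_sum) (use N0 in simp)
  also have "\<dots> = ennreal (2 * ((4 * N) * Mr powr (1 / qq)))" by (simp add: mult.assoc)
  finally show ?thesis by (simp add: lp Mr_def)
qed

end

lemma sq_le_powr: "1 < p \<Longrightarrow> (x::real)\<^sup>2 \<le> 1 + \<bar>x\<bar> powr (2 * p)"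
proof -
  assume p: "1 < p"
  show ?thesis
  proof (cases "\<bar>x\<bar> \<le> 1")
    case True
    then have "x\<^sup>2 \<le> 1" by (simp add: abs_le_square_iff power2_abs abs_square_le_1)
    moreover have "0 \<le> \<bar>x\<bar> powr (2 * p)" by simp
    ultimately show ?thesis by linarith
  next
    case False
    then have x1: "1 \<le> \<bar>x\<bar>" by simp
    have "x\<^sup>2 = \<bar>x\<bar> powr 2" using x1 by (simp add: power2_abs)
    also have "\<dots> \<le> \<bar>x\<bar> powr (2 * p)" by (rule powr_mono) (use p x1 in auto)
    finally show ?thesis by simp
  qed
qed

context pmsetup
begin

lemma main:
  fixes p :: ereal and qq s :: real and f :: "'a \<times> real \<Rightarrow> real"
  assumes p1: "1 < p" and q1: "1 \<le> qq" and pq: "inverse p + ereal (1 / qq) = 1" and s: "0 < s"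
    and L: "L0_2p PT p f"
  shows "dirichlet PT (Pbar \<pi> q Q) f
      \<le> s * dirichlet PT (Ptilde \<pi> q Q) f + Phi PT p f * (\<integral>x. measure (pitilde_x Q x) {s..} \<partial>\<pi>) powr (1 / qq)"
proof -
  interpret PTp: prob_space PT by (rule Pi_prob)
  have fmP: "f \<in> borel_measurable PT" and fi: "integrable PT f" using L by (auto simp: L0_2p_def)
  have fm[measurable]: "f \<in> borel_measurable E" using fmP by (simp cong: measurable_cong_sets)
  define Mr where "Mr = enn2real (Mw s)"
  have Mr0: "0 \<le> Mr" by (simp add: Mr_def)
  have MM: "(\<integral>x. measure (pitilde_x Q x) {s..} \<partial>\<pi>) = Mr" by (simp add: Mw_eq Mr_def)
  show ?thesis
  proof (cases "p = \<infinity>")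
    case True
    have qq1: "qq = 1" using pq True by simp
    have fin: "esssup PT (\<lambda>z. ereal \<bar>f z\<bar>) < \<infinity>" using L True by (simp add: L0_2p_def)
    define ea where "ea = esssup PT (\<lambda>z. ereal (f z))"
    define eb where "eb = esssup PT (\<lambda>z. ereal (- f z))"
    have aeA: "AE z in PT. ereal (f z) \<le> ea" unfolding ea_def by (rule esssup_AE)
    have aeB: "AE z in PT. ereal (- f z) \<le> eb" unfolding eb_def by (rule esssup_AE)
    have eaf: "ea < \<infinity>"
    proof -
      have "ea \<le> esssup PT (\<lambda>z. ereal \<bar>f z\<bar>)" unfolding ea_def by (rule esssup_mono) (use fmP in auto)
      then show ?thesis using fin le_less_trans by blast
    qed
    have ebf: "eb < \<infinity>"
    proof -
      have "eb \<le> esssup PT (\<lambda>z. ereal \<bar>f z\<bar>)" unfolding eb_def by (rule esssup_mono) (use fmP in auto)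
      then show ?thesis using fin le_less_trans by blast
    qed
    have eam: "ea \<noteq> - \<infinity>"
    proof
      assume "ea = - \<infinity>"
      then have "AE z in PT. False" using aeA by simp
      then show False using PTp.AE_False by simp
    qed
    have ebm: "eb \<noteq> - \<infinity>"
    proof
      assume "eb = - \<infinity>"
      then have "AE z in PT. False" using aeB by simp
      then show False using PTp.AE_False by simp
    qed
    obtain a where a: "ea = ereal a" using eaf eam by (cases ea) auto
    obtain b where b: "eb = ereal b" using ebf ebm by (cases eb) auto
    have ae: "AE z in PT. f z \<le> a \<and> - f z \<le> b" using aeA aeB by eventually_elim (simp add: a b)
    have f2: "integrable PT (\<lambda>z. (f z)\<^sup>2)"
    proof (rule Bochner_Integration.integrable_bound[OF PTp.integrable_const[of "(\<bar>a\<bar> + \<bar>b\<bar>)\<^sup>2"]])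
      show "(\<lambda>z. (f z)\<^sup>2) \<in> borel_measurable PT" using fmP by simp
      show "AE z in PT. norm ((f z)\<^sup>2) \<le> norm ((\<bar>a\<bar> + \<bar>b\<bar>)\<^sup>2)"
        using ae
      proof eventually_elim
        case (elim z)
        then have "\<bar>f z\<bar> \<le> \<bar>a\<bar> + \<bar>b\<bar>" by auto
        then have "\<bar>f z\<bar>\<^sup>2 \<le> (\<bar>a\<bar> + \<bar>b\<bar>)\<^sup>2" by (rule power_mono) simp
        then show ?case by simp
      qed
    qed
    have osc: "oscnorm PT f = a + b" unfolding oscnorm_def using a b ea_def eb_def by simp
    have Ph: "Phi PT p f = (a + b)\<^sup>2" using True osc by (simp add: Phi_def)
    have "dirichlet PT (Pbar \<pi> q Q) f \<le> s * dirichlet PT (Ptilde \<pi> q Q) f + (a + b)\<^sup>2 * Mr"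
      by (rule main_common[OF fm fi f2 s]) (use Mr0 T1_inf[OF fm ae, of s] in \<open>simp_all add: Mr_def\<close>)
    then show ?thesis using Ph MM qq1 Mr0 by simp
  next
    case False
    obtain p' where pp: "p = ereal p'" using False p1 by (cases p) auto
    have p'1: "1 < p'" using p1 pp by simp
    have pq': "1 / p' + 1 / qq = 1"
    proof -
      have "ereal (1 / p') + ereal (1 / qq) = 1" using pq pp p'1 by (simp add: divide_inverse)
      then show ?thesis by (simp only: plus_ereal.simps(1) one_ereal_def ereal.inject)
    qed
    have fp: "integrable PT (\<lambda>z. \<bar>f z\<bar> powr (2 * p'))" using L False pp by (simp add: L0_2p_def)
    have f2: "integrable PT (\<lambda>z. (f z)\<^sup>2)"
    proof (rule Bochner_Integration.integrable_bound[OF Bochner_Integration.integrable_add[OF PTp.integrable_const[of "1::real"] fp]])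
      show "(\<lambda>z. (f z)\<^sup>2) \<in> borel_measurable PT" using fmP by simp
      show "AE z in PT. norm ((f z)\<^sup>2) \<le> norm (1 + \<bar>f z\<bar> powr (2 * p'))"
        using sq_le_powr[OF p'1] by (auto intro!: AE_I2 simp del: powr_numeral)
    qed
    have Ph: "Phi PT p f = 4 * (lpnorm PT (2 * p') f)\<^sup>2" using False pp by (simp add: Phi_def)
    have R0: "0 \<le> 4 * (lpnorm PT (2 * p') f)\<^sup>2 * Mr powr (1 / qq)" using Mr0 by simp
    have "dirichlet PT (Pbar \<pi> q Q) f \<le> s * dirichlet PT (Ptilde \<pi> q Q) f + 4 * (lpnorm PT (2 * p') f)\<^sup>2 * Mr powr (1 / qq)"
      by (rule main_common[OF fm fi f2 s R0]) (use T1_fin[OF fm p'1 pq' fp, of s] in \<open>simp add: Mr_def\<close>)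
    then show ?thesis using Ph MM by simp
  qed
qed

end

theorem theorem43:
  fixes \<pi> :: "'a measure" and q :: "'a \<Rightarrow> 'a measure" and Q :: "'a \<Rightarrow> real measure"
    and p :: ereal and qq :: real and s :: real and f :: "'a \<times> real \<Rightarrow> real"
  assumes "prob_space \<pi>"
    and "q \<in> \<pi> \<rightarrow>\<^sub>M prob_algebra \<pi>"
    and "Q \<in> \<pi> \<rightarrow>\<^sub>M prob_algebra borel"
    and "\<And>x. x \<in> space \<pi> \<Longrightarrow> AE w in Q x. 0 \<le> w"
    and "\<And>x. x \<in> space \<pi> \<Longrightarrow> integrable (Q x) (\<lambda>w. w)"
    and "\<And>x. x \<in> space \<pi> \<Longrightarrow> (\<integral> w. w \<partial>Q x) = 1"
    and "absolutely_continuous (prop_joint \<pi> q) (rev_joint \<pi> q)"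
    and "1 < p" and "1 \<le> qq" and "inverse p + ereal (1 / qq) = 1"
    and "0 < s"
    and "L0_2p (pitilde \<pi> Q) p f"
  shows "dirichlet (pitilde \<pi> Q) (Pbar \<pi> q Q) f
           \<le> s * dirichlet (pitilde \<pi> Q) (Ptilde \<pi> q Q) f
             + Phi (pitilde \<pi> Q) p f * (\<integral> x. measure (pitilde_x Q x) {s..} \<partial>\<pi>) powr (1 / qq)"
proof -
  interpret pmsetup \<pi> q Q
    by (rule pmsetup.intro[OF assms(1-7)])
  show ?thesis by (rule main[OF assms(8-12)])
qed

end
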